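(* Let $C$ be a finite acyclic category and let $F\colon C\to C$ be a functor. Then: (a) $\mathcal{L}_R(F)=\chi\big(R(C)^{R(F)}\big)$; (b) $\mathcal{L}(F)=\chi(C^F)$. Moreover, if $\mathcal{L}_R(F)\neq 0$ or $\mathcal{L}(F)\neq 0$, then there exists at least one object $x$ of $C$ with $F(x)=x$.
   Context: An acyclic (loop-free) category is a small category in which only identity morphisms have inverses and the only morphism from an object to itself is the identity; it is finite if it has finitely many morphisms. The nerve $\Delta(C)$ of an acyclic category $C$ is the regular trisp (generalized simplicial complex, simplices may share vertex sets) whose vertices are the objects of $C$ and which has one $k$-simplex for each chain $x_0\xrightarrow{\alpha_1}x_1\to\cdots\xrightarrow{\alpha_k}x_k$ of $k\ge 1$ composable non-identity morphisms; a functor $F$ induces the map $\Delta(F)$ sending such a chain to $F(x_0)\xrightarrow{F(\alpha_1)}\cdots\xrightarrow{F(\alpha_k)}F(x_k)$. Homology and Euler characteristic $\chi$ of an acyclic category are those of its nerve (a poset is regarded as an acyclic category with one arrow $x\to y$ iff $x\le y$, so its nerve is its order complex); $\chi(\emptyset)=0$. For a self-map $f$ of such a finite complex, the Lefschetz number is $\mathcal{L}(f)=\sum_{i\ge0}(-1)^i\,\mathrm{trace}(H_i(f))$ with rational coefficients. $R(C)$ is the poset on the objects of $C$ with $x\le y$ iff there is a morphism $x\to y$, and $R(F)\colon R(C)\to R(C)$ is the order-preserving map $x\mapsto F(x)$; $R(C)^{R(F)}$ is the subposet of elements fixed by $R(F)$. Define $\mathcal{L}(F)=\mathcal{L}(\Delta(F))$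 and $\mathcal{L}_R(F)=\mathcal{L}(R(F))$. The fixed subcategory $C^F$ is the acyclic category whose objects are the objects $x$ with $F(x)=x$ and whose morphisms are the morphisms $\alpha$ with $F(\alpha)=\alpha$. *)

theory Defs
  imports Complex_Main
begin

record ('o, 'm) cat =
  Ob  :: "'o set"
  Mor :: "'m set"
  Dm  :: "'m \<Rightarrow> 'o"
  Cd  :: "'m \<Rightarrow> 'o"
  Idt :: "'o \<Rightarrow> 'm"
  Cmp :: "'m \<Rightarrow> 'm \<Rightarrow> 'm"   \<comment> \<open>Cmp C b a = b o a (first a, then b)\<close>

definition is_category :: "('o, 'm) cat \<Rightarrow> bool" where
  "is_category C \<longleftrightarrow>
     (\<forall>a\<in>Mor C. Dm C a \<in> Ob C \<and> Cd C a \<in> Ob C) \<and>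
     (\<forall>x\<in>Ob C. Idt C x \<in> Mor C \<and> Dm C (Idt C x) = x \<and> Cd C (Idt C x) = x) \<and>
     (\<forall>a\<in>Mor C. \<forall>b\<in>Mor C. Cd C a = Dm C b \<longrightarrow>
        Cmp C b a \<in> Mor C \<and> Dm C (Cmp C b a) = Dm C a \<and> Cd C (Cmp C b a) = Cd C b) \<and>
     (\<forall>a\<in>Mor C. \<forall>b\<in>Mor C. \<forall>c\<in>Mor C. Cd C a = Dm C b \<and> Cd C b = Dm C c \<longrightarrow>
        Cmp C c (Cmp C b a) = Cmp C (Cmp C c b) a) \<and>
     (\<forall>a\<in>Mor C. Cmp C (Idt C (Cd C a)) a = a \<and> Cmp C a (Idt C (Dm C a)) = a)"

definition is_identity :: "('o, 'm) cat \<Rightarrow> 'm \<Rightarrow> bool" where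
  "is_identity C a \<longleftrightarrow> a = Idt C (Dm C a)"

definition acyclic_cat :: "('o, 'm) cat \<Rightarrow> bool" where
  "acyclic_cat C \<longleftrightarrow> is_category C \<and>
     (\<forall>a\<in>Mor C. (\<exists>b\<in>Mor C. Dm C b = Cd C a \<and> Cd C b = Dm C a \<and>
         Cmp C b a = Idt C (Dm C a) \<and> Cmp C a b = Idt C (Cd C a)) \<longrightarrow> is_identity C a) \<and>
     (\<forall>a\<in>Mor C. Dm C a = Cd C a \<longrightarrow> is_identity C a)"

definition finite_acyclic_cat :: "('o, 'm) cat \<Rightarrow> bool" where
  "finite_acyclic_cat C \<longleftrightarrow> acyclic_cat C \<and> finite (Mor C)"

definition is_functor :: "('o, 'm) cat \<Rightarrow> ('o \<Rightarrow> 'o) \<Rightarrow> ('m \<Rightarrow> 'm) \<Rightarrow> bool" where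
  "is_functor C Fo Fm \<longleftrightarrow>
     (\<forall>x\<in>Ob C. Fo x \<in> Ob C) \<and>
     (\<forall>a\<in>Mor C. Fm a \<in> Mor C \<and> Dm C (Fm a) = Fo (Dm C a) \<and> Cd C (Fm a) = Fo (Cd C a)) \<and>
     (\<forall>x\<in>Ob C. Fm (Idt C x) = Idt C (Fo x)) \<and>
     (\<forall>a\<in>Mor C. \<forall>b\<in>Mor C. Cd C a = Dm C b \<longrightarrow> Fm (Cmp C b a) = Cmp C (Fm b) (Fm a))"

definition fixed_cat :: "('o, 'm) cat \<Rightarrow> ('o \<Rightarrow> 'o) \<Rightarrow> ('m \<Rightarrow> 'm) \<Rightarrow> ('o, 'm) cat" where
  "fixed_cat C Fo Fm = C\<lparr>Ob := {x \<in> Ob C. Fo x = x}, Mor := {a \<in> Mor C. Fm a = a}\<rparr>"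

definition poset_cat :: "'o set \<Rightarrow> ('o \<Rightarrow> 'o \<Rightarrow> bool) \<Rightarrow> ('o, 'o \<times> 'o) cat" where
  "poset_cat P le = \<lparr>Ob = P, Mor = {(x, y). x \<in> P \<and> y \<in> P \<and> le x y},
     Dm = fst, Cd = snd, Idt = (\<lambda>x. (x, x)), Cmp = (\<lambda>b a. (fst a, snd b))\<rparr>"

definition reach :: "('o, 'm) cat \<Rightarrow> 'o \<Rightarrow> 'o \<Rightarrow> bool" where
  "reach C x y \<longleftrightarrow> (\<exists>a\<in>Mor C. Dm C a = x \<and> Cd C a = y)"

definition Rcat :: "('o, 'm) cat \<Rightarrow> ('o, 'o \<times> 'o) cat" where
  "Rcat C = poset_cat (Ob C) (reach C)"

definition Rmor :: "('o \<Rightarrow> 'o) \<Rightarrow> 'o \<times> 'o \<Rightarrow> 'o \<times> 'o" where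
  "Rmor Fo p = (Fo (fst p), Fo (snd p))"

definition Rfix :: "('o, 'm) cat \<Rightarrow> ('o \<Rightarrow> 'o) \<Rightarrow> ('o, 'o \<times> 'o) cat" where
  "Rfix C Fo = poset_cat {x \<in> Ob C. Fo x = x} (reach C)"

text \<open>A k-simplex is represented as (x0, [a1,...,ak]); for k = 0 just (x, []).\<close>
definition Simp :: "('o, 'm) cat \<Rightarrow> nat \<Rightarrow> ('o \<times> 'm list) set" where
  "Simp C k = {(x, ms). length ms = k \<and>
     (ms = [] \<longrightarrow> x \<in> Ob C) \<and>
     (ms \<noteq> [] \<longrightarrow> x = Dm C (hd ms)) \<and>
     set ms \<subseteq> Mor C \<and> (\<forall>a\<in>set ms. \<not> is_identity C a) \<and>
     (\<forall>i. Suc i < k \<longrightarrow> Cd C (ms ! i) = Dm C (ms ! Suc i))}"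

definition vert :: "('o, 'm) cat \<Rightarrow> 'o \<times> 'm list \<Rightarrow> nat \<Rightarrow> 'o" where
  "vert C s j = (if j = 0 then fst s else Cd C (snd s ! (j - 1)))"

text \<open>i-th face (delete vertex i) of a simplex of dimension k = length ms >= 1.\<close>
definition face :: "('o, 'm) cat \<Rightarrow> 'o \<times> 'm list \<Rightarrow> nat \<Rightarrow> 'o \<times> 'm list" where
  "face C s i = (let ms = snd s; k = length ms in
     if i = 0 then (vert C s 1, tl ms)
     else if i = k then (fst s, butlast ms)
     else (fst s, take (i - 1) ms @ [Cmp C (ms ! i) (ms ! (i - 1))] @ drop (i + 1) ms))"

definition lincomb :: "rat list \<Rightarrow> ('s \<Rightarrow> rat) list \<Rightarrow> 's \<Rightarrow> rat" where
  "lincomb cs vs = (\<lambda>s. \<Sum>i<length vs. cs ! i * (vs ! i) s)"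

definition lspan :: "('s \<Rightarrow> rat) list \<Rightarrow> ('s \<Rightarrow> rat) set" where
  "lspan vs = {lincomb cs vs | cs. length cs = length vs}"

definition lindep_free :: "('s \<Rightarrow> rat) list \<Rightarrow> bool" where
  "lindep_free vs \<longleftrightarrow> (\<forall>cs. length cs = length vs \<and> lincomb cs vs = (\<lambda>_. 0) \<longrightarrow>
      (\<forall>i<length cs. cs ! i = 0))"

definition is_basis :: "('s \<Rightarrow> rat) set \<Rightarrow> ('s \<Rightarrow> rat) list \<Rightarrow> bool" where
  "is_basis W vs \<longleftrightarrow> lindep_free vs \<and> lspan vs = W"

definition coord :: "('s \<Rightarrow> rat) list \<Rightarrow> ('s \<Rightarrow> rat) \<Rightarrow> rat list" where
  "coord vs v = (THE cs. length cs = length vs \<and> lincomb cs vs = v)"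

text \<open>A basis bs of B extended by cs to a basis of Z; the images of cs form a basis of Z/B.\<close>
definition adapted_basis :: "('s \<Rightarrow> rat) set \<Rightarrow> ('s \<Rightarrow> rat) set \<Rightarrow>
    ('s \<Rightarrow> rat) list \<times> ('s \<Rightarrow> rat) list" where
  "adapted_basis Z B = (SOME p. is_basis B (fst p) \<and> is_basis Z (fst p @ snd p))"

definition quot_dim :: "('s \<Rightarrow> rat) set \<Rightarrow> ('s \<Rightarrow> rat) set \<Rightarrow> nat" where
  "quot_dim Z B = length (snd (adapted_basis Z B))"

text \<open>Trace of the map induced on Z/B by f (with f Z <= Z, f B <= B).\<close>
definition quot_trace :: "('s \<Rightarrow> rat) set \<Rightarrow> ('s \<Rightarrow> rat) set \<Rightarrow>
    (('s \<Rightarrow> rat) \<Rightarrow> ('s \<Rightarrow> rat)) \<Rightarrow> rat" where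
  "quot_trace Z B f = (let p = adapted_basis Z B; bs = fst p; cs = snd p in
     \<Sum>j<length cs. coord (bs @ cs) (f (cs ! j)) ! (length bs + j))"

definition supported :: "('s \<Rightarrow> rat) \<Rightarrow> 's set \<Rightarrow> bool" where
  "supported c S \<longleftrightarrow> (\<forall>s. c s \<noteq> 0 \<longrightarrow> s \<in> S)"

definition chains :: "('o, 'm) cat \<Rightarrow> nat \<Rightarrow> ('o \<times> 'm list \<Rightarrow> rat) set" where
  "chains C k = {c. supported c (Simp C k)}"

definition bd :: "('o, 'm) cat \<Rightarrow> nat \<Rightarrow> ('o \<times> 'm list \<Rightarrow> rat) \<Rightarrow> ('o \<times> 'm list \<Rightarrow> rat)" where
  "bd C k c = (if k = 0 then (\<lambda>_. 0) else
     (\<lambda>t. \<Sum>s\<in>Simp C k. c s * (\<Sum>i\<le>k. if face C s i = t then (-1) ^ i else 0)))"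

definition cycles :: "('o, 'm) cat \<Rightarrow> nat \<Rightarrow> ('o \<times> 'm list \<Rightarrow> rat) set" where
  "cycles C k = {c \<in> chains C k. bd C k c = (\<lambda>_. 0)}"

definition boundaries :: "('o, 'm) cat \<Rightarrow> nat \<Rightarrow> ('o \<times> 'm list \<Rightarrow> rat) set" where
  "boundaries C k = bd C (Suc k) ` chains C (Suc k)"

text \<open>Chain map induced by Delta(F): a simplex goes to its image chain if no arrow is
  sent to an identity, and to 0 otherwise (its image is degenerate).\<close>
definition chain_map :: "('o, 'm) cat \<Rightarrow> ('o \<Rightarrow> 'o) \<Rightarrow> ('m \<Rightarrow> 'm) \<Rightarrow> nat \<Rightarrow>
    ('o \<times> 'm list \<Rightarrow> rat) \<Rightarrow> ('o \<times> 'm list \<Rightarrow> rat)" where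
  "chain_map C Fo Fm k c = (\<lambda>t. \<Sum>s\<in>Simp C k.
     if (\<forall>a\<in>set (snd s). \<not> is_identity C (Fm a)) \<and> (Fo (fst s), map Fm (snd s)) = t
     then c s else 0)"

text \<open>Lefschetz number of Delta(F) (rational homology). The nerve of a finite acyclic
  category has no simplices of dimension >= card (Mor C), so the sum is complete.\<close>
definition lefschetz :: "('o, 'm) cat \<Rightarrow> ('o \<Rightarrow> 'o) \<Rightarrow> ('m \<Rightarrow> 'm) \<Rightarrow> rat" where
  "lefschetz C Fo Fm = (\<Sum>i\<le>card (Mor C).
     (-1) ^ i * quot_trace (cycles C i) (boundaries C i) (chain_map C Fo Fm i))"

definition euler :: "('o, 'm) cat \<Rightarrow> int" where
  "euler C = (\<Sum>i\<le>card (Mor C). (-1) ^ i * int (quot_dim (cycles C i) (boundaries C i)))"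

end

theory Submission
  imports Defs "HOL-Library.Function_Algebras"
begin

definition lc :: "(nat \<Rightarrow> rat) \<Rightarrow> ('s \<Rightarrow> rat) list \<Rightarrow> 's \<Rightarrow> rat" where
  "lc c vs = (\<lambda>s. \<Sum>i<length vs. c i * (vs ! i) s)"

lemma lincomb_lc: "lincomb cs vs = lc (nth cs) vs"
  by (simp add: lincomb_def lc_def)

lemma lc_cong: "(\<And>i. i < length vs \<Longrightarrow> c i = d i) \<Longrightarrow> lc c vs = lc d vs"
  by (auto simp: lc_def intro!: sum.cong)

lemma lspan_lc: "lspan vs = range (\<lambda>c. lc c vs)"
proof -
  have "lc c vs \<in> lspan vs" for c
    unfolding lspan_def lincomb_lc
    by (rule CollectI, rule exI[of _ "map c [0..<length vs]"]) (auto intro!: lc_cong)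
  then show ?thesis unfolding lspan_def lincomb_lc by auto
qed

lemma lindep_free_lc:
  "lindep_free vs \<longleftrightarrow> (\<forall>c. lc c vs = (\<lambda>_. 0) \<longrightarrow> (\<forall>i<length vs. c i = 0))"
proof
  assume L: "lindep_free vs"
  show "\<forall>c. lc c vs = (\<lambda>_. 0) \<longrightarrow> (\<forall>i<length vs. c i = 0)"
  proof (intro allI impI)
    fix c i assume "lc c vs = (\<lambda>_. 0)" "i < length vs"
    moreover have "lc c vs = lincomb (map c [0..<length vs]) vs"
      unfolding lincomb_lc by (auto intro!: lc_cong)
    ultimately show "c i = 0" using L unfolding lindep_free_def
      by (metis (no_types, lifting) diff_zero length_map length_upt nth_map_upt add_0)
  qed
next
  assume "\<forall>c. lc c vs = (\<lambda>_. 0) \<longrightarrow> (\<forall>i<length vs. c i = 0)"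
  then show "lindep_free vs" unfolding lindep_free_def lincomb_lc by auto
qed

lemma sum_lessThan_add: "(\<Sum>i<n+m. f i) = (\<Sum>i<n. f i) + (\<Sum>i<m. f ((n::nat)+i))"
  by (induction m arbitrary: n) (auto simp: add.assoc)

lemma lc_append:
  "lc c (vs @ ws) = (\<lambda>s. lc c vs s + lc (\<lambda>i. c (length vs + i)) ws s)"
  unfolding lc_def by (auto simp: sum_lessThan_add nth_append intro!: ext sum.cong)

lemma lc_lin: "lc (\<lambda>i. a * c i + b * d i) vs = (\<lambda>s. a * lc c vs s + b * lc d vs s)"
  unfolding lc_def by (auto simp: sum_distrib_left sum.distrib algebra_simps)

lemma lc_zero[simp]: "lc (\<lambda>_. 0) vs = (\<lambda>_. 0)"
  unfolding lc_def by auto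

lemma lc_Nil[simp]: "lc c [] = (\<lambda>_. 0)"
  unfolding lc_def by auto

lemma lc_unit: "j < length vs \<Longrightarrow> lc (\<lambda>i. if i = j then 1 else 0) vs = vs ! j"
proof -
  assume j: "j < length vs"
  have "lc (\<lambda>i. if i = j then 1 else 0) vs = (\<lambda>s. \<Sum>i<length vs. if i = j then (vs ! i) s else 0)"
    unfolding lc_def by (intro ext sum.cong) auto
  then show ?thesis using j by simp
qed

lemma lc_sum:
  assumes "finite I"
  shows "(\<lambda>s. \<Sum>l\<in>I. a l * lc (c l) vs s) = lc (\<lambda>i. \<Sum>l\<in>I. a l * c l i) vs"
  unfolding lc_def by (auto simp: sum_distrib_left sum_distrib_right intro!: ext sum.swap[THEN trans] sum.cong simp: algebra_simps)

definition lin :: "(('s \<Rightarrow> rat) \<Rightarrow> ('t \<Rightarrow> rat)) \<Rightarrow> bool" where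
  "lin f \<longleftrightarrow> (\<forall>u v a b. f (\<lambda>s. a * u s + b * v s) = (\<lambda>s. a * f u s + b * f v s))"

lemma linD: "lin f \<Longrightarrow> f (\<lambda>s. a * u s + b * v s) = (\<lambda>s. a * f u s + b * f v s)"
  by (simp add: lin_def)

lemma lin_zero: "lin f \<Longrightarrow> f (\<lambda>_. 0) = (\<lambda>_. 0)"
  unfolding lin_def by (drule spec[of _ "\<lambda>_. 0"], drule spec[of _ "\<lambda>_. 0"], drule spec[of _ 0], drule spec[of _ 0]) simp

lemma lin_sum:
  assumes "lin f" "finite I"
  shows "f (\<lambda>s. \<Sum>l\<in>I. a l * u l s) = (\<lambda>s. \<Sum>l\<in>I. a l * f (u l) s)"
  using assms(2)
proof (induction I)
  case empty then show ?case using lin_zero[OF assms(1)] by simp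
next
  case (insert x F)
  have "f (\<lambda>s. \<Sum>l\<in>insert x F. a l * u l s) = f (\<lambda>s. a x * u x s + 1 * (\<Sum>l\<in>F. a l * u l s))"
    using insert by simp
  also have "\<dots> = (\<lambda>s. a x * f (u x) s + 1 * f (\<lambda>s. \<Sum>l\<in>F. a l * u l s) s)"
    by (rule linD[OF assms(1)])
  finally show ?case using insert by simp
qed

lemma lin_lc: "lin f \<Longrightarrow> f (lc c vs) = lc c (map f vs)"
  unfolding lc_def using lin_sum[of f "{..<length vs}" c "\<lambda>i. vs ! i"] by simp

lemma lin_id: "lin (\<lambda>x. x)" by (simp add: lin_def)

lemma basis_mem: "is_basis W vs \<Longrightarrow> v \<in> W \<longleftrightarrow> (\<exists>c. v = lc c vs)"
  unfolding is_basis_def lspan_lc by auto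

lemma basis_lc: "is_basis W vs \<Longrightarrow> lc c vs \<in> W"
  using basis_mem by blast

lemma basis_uniq:
  assumes "is_basis W vs" "lc c vs = lc d vs" "i < length vs"
  shows "c i = d i"
proof -
  have "lc (\<lambda>i. 1 * c i + (-1) * d i) vs = (\<lambda>_. 0)"
    unfolding lc_lin using assms(2) by simp
  then show ?thesis using assms(1,3) unfolding is_basis_def lindep_free_lc by fastforce
qed

definition co :: "('s \<Rightarrow> rat) list \<Rightarrow> ('s \<Rightarrow> rat) \<Rightarrow> nat \<Rightarrow> rat" where
  "co vs v i = coord vs v ! i"

lemma co_lc:
  assumes "is_basis W vs" "i < length vs"
  shows "co vs (lc c vs) i = c i"
proof -
  let ?cs = "map c [0..<length vs]"
  have ex: "length ?cs = length vs \<and> lincomb ?cs vs = lc c vs"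
    unfolding lincomb_lc by (auto intro!: lc_cong)
  have "coord vs (lc c vs) = ?cs"
    unfolding coord_def
  proof (rule the_equality)
    fix cs assume "length cs = length vs \<and> lincomb cs vs = lc c vs"
    then show "cs = ?cs" using basis_uniq[OF assms(1)] unfolding lincomb_lc
      by (intro nth_equalityI) (auto)
  qed (rule ex)
  then show ?thesis using assms(2) by (simp add: co_def)
qed

lemma co_expand: "is_basis W vs \<Longrightarrow> v \<in> W \<Longrightarrow> v = lc (co vs v) vs"
  by (metis basis_mem co_lc lc_cong)

lemma co_sum:
  assumes B: "is_basis W vs" and I: "finite I" and u: "\<And>l. l \<in> I \<Longrightarrow> u l \<in> W"
    and j: "j < length vs"
  shows "co vs (\<lambda>s. \<Sum>l\<in>I. a l * u l s) j = (\<Sum>l\<in>I. a l * co vs (u l) j)"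
proof -
  have "(\<lambda>s. \<Sum>l\<in>I. a l * u l s) = (\<lambda>s. \<Sum>l\<in>I. a l * lc (co vs (u l)) vs s)"
    using co_expand[OF B u] by (auto intro!: ext sum.cong)
  also have "\<dots> = lc (\<lambda>i. \<Sum>l\<in>I. a l * co vs (u l) i) vs" by (rule lc_sum[OF I])
  finally show ?thesis using co_lc[OF B j] by simp
qed

lemma co_lin:
  assumes B: "is_basis W vs" and "u \<in> W" "v \<in> W" "j < length vs"
  shows "co vs (\<lambda>s. a * u s + b * v s) j = a * co vs u j + b * co vs v j"
proof -
  have "(\<lambda>s. a * u s + b * v s) = lc (\<lambda>i. a * co vs u i + b * co vs v i) vs"
    unfolding lc_lin using co_expand[OF B] assms by metis
  then show ?thesis using co_lc[OF B assms(4)] by simp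
qed

definition tr :: "('s \<Rightarrow> rat) list \<Rightarrow> (('s \<Rightarrow> rat) \<Rightarrow> ('s \<Rightarrow> rat)) \<Rightarrow> rat" where
  "tr vs f = (\<Sum>j<length vs. co vs (f (vs ! j)) j)"

lemma basis_nth_mem: "is_basis W vs \<Longrightarrow> j < length vs \<Longrightarrow> vs ! j \<in> W"
  using lc_unit basis_lc by metis

lemma tr_invariant:
  assumes V: "is_basis W vs" and U: "is_basis W ws" and f: "lin f" "\<And>v. v \<in> W \<Longrightarrow> f v \<in> W"
  shows "tr vs f = tr ws f"
proof -
  let ?n = "length vs" and ?m = "length ws"
  have fw: "f (ws ! l) \<in> W" if "l < ?m" for l using f(2) basis_nth_mem[OF U that] .
  have "tr vs f = (\<Sum>j<?n. co vs (\<lambda>s. \<Sum>l<?m. co ws (vs ! j) l * f (ws ! l) s) j)"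
    unfolding tr_def
  proof (rule sum.cong[OF refl])
    fix j assume j: "j \<in> {..<?n}"
    have "vs ! j = lc (co ws (vs ! j)) ws" using co_expand[OF U basis_nth_mem[OF V]] j by simp
    then have "f (vs ! j) = lc (co ws (vs ! j)) (map f ws)" using lin_lc[OF f(1)] by metis
    then show "co vs (f (vs ! j)) j = co vs (\<lambda>s. \<Sum>l<?m. co ws (vs ! j) l * f (ws ! l) s) j"
      by (simp add: lc_def)
  qed
  also have "\<dots> = (\<Sum>j<?n. \<Sum>l<?m. co ws (vs ! j) l * co vs (f (ws ! l)) j)"
    by (rule sum.cong[OF refl], rule co_sum[OF V]) (auto intro: fw)
  also have "\<dots> = (\<Sum>l<?m. \<Sum>j<?n. co vs (f (ws ! l)) j * co ws (vs ! j) l)"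
    by (subst sum.swap) (simp add: mult.commute)
  also have "\<dots> = (\<Sum>l<?m. co ws (\<lambda>s. \<Sum>j<?n. co vs (f (ws ! l)) j * (vs ! j) s) l)"
    by (rule sum.cong[OF refl], rule co_sum[OF U, symmetric]) (auto intro: basis_nth_mem[OF V])
  also have "\<dots> = (\<Sum>l<?m. co ws (f (ws ! l)) l)"
    using co_expand[OF V fw] by (auto intro!: sum.cong simp: lc_def)
  finally show ?thesis by (simp add: tr_def)
qed

lemma co_unit: "is_basis W vs \<Longrightarrow> i < length vs \<Longrightarrow> j < length vs \<Longrightarrow> co vs (vs ! j) i = (if i = j then 1 else 0)"
  using co_lc[of W vs i "\<lambda>i. if i = j then 1 else 0"] lc_unit by metis

lemma tr_id: "is_basis W vs \<Longrightarrow> tr vs (\<lambda>x. x) = of_nat (length vs)"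
  unfolding tr_def by (simp add: co_unit)

lemma fun_sum_apply: "sum f A x = (\<Sum>a\<in>A. f a x)"
  by (induction A rule: infinite_finite_induct) auto

lemma vs_fun: "vector_space (\<lambda>(c::rat) (f::'s \<Rightarrow> rat) x. c * f x)"
  by unfold_locales (auto simp: fun_eq_iff algebra_simps)

lemma sum_nth_set: "distinct vs \<Longrightarrow> (\<Sum>k<length vs. g (vs ! k)) = sum g (set vs)"
  by (simp add: sum_list_distinct_conv_sum_set[symmetric] sum_list_sum_nth atLeast0LessThan
      flip: map_nth) 

lemma lindep_distinct:
  assumes L: "lindep_free vs" shows "distinct vs"
proof (rule ccontr)
  assume "\<not> distinct vs"
  then obtain i j where ij: "i < length vs" "j < length vs" "i \<noteq> j" "vs ! i = vs ! j"
    by (auto simp: distinct_conv_nth)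
  let ?c = "\<lambda>k. 1 * (if k = i then 1 else 0) + (-1) * (if k = j then 1 else 0) :: rat"
  have "lc ?c vs = (\<lambda>_. 0)" unfolding lc_lin using lc_unit[OF ij(1)] lc_unit[OF ij(2)] ij(4) by simp
  then have "?c i = 0" using L ij unfolding lindep_free_lc by blast
  then show False using ij by simp
qed

lemma lindep_bound:
  assumes S: "finite S" and L: "lindep_free vs" and sup: "\<And>v. v \<in> set vs \<Longrightarrow> supported v S"
  shows "length vs \<le> card S"
proof -
  interpret V: vector_space "\<lambda>(c::rat) (f::'s \<Rightarrow> rat) x. c * f x" by (rule vs_fun)
  have D: "distinct vs" by (rule lindep_distinct[OF L])
  let ?ind = "\<lambda>s. (\<lambda>x. if x = s then 1 else 0 :: rat)"
  have indep: "V.independent (set vs)"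
    unfolding V.independent_explicit_module
  proof (intro allI impI)
    fix t u v assume t: "finite t" "t \<subseteq> set vs" and z: "(\<Sum>v\<in>t. (\<lambda>x. u v * v x)) = 0" and v: "v \<in> t"
    let ?c = "\<lambda>k. if vs ! k \<in> t then u (vs ! k) else 0"
    have "lc ?c vs = (\<lambda>x. \<Sum>w\<in>set vs. (if w \<in> t then u w else 0) * w x)"
      unfolding lc_def by (rule ext, rule sum_nth_set[OF D])
    also have "\<dots> = (\<lambda>x. \<Sum>w\<in>t. u w * w x)"
    proof
      fix x
      have "(\<Sum>w\<in>set vs. (if w \<in> t then u w else 0) * w x) = (\<Sum>w\<in>set vs. if w \<in> t then u w * w x else 0)"
        by (rule sum.cong) auto
      also have "\<dots> = (\<Sum>w\<in>{w\<in>set vs. w \<in> t}. u w * w x)" by (simp add: sum.inter_filter)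
      also have "{w\<in>set vs. w \<in> t} = t" using t by auto
      finally show "(\<Sum>w\<in>set vs. (if w \<in> t then u w else 0) * w x) = (\<Sum>w\<in>t. u w * w x)" .
    qed
    also have "\<dots> = (\<lambda>_. 0)" using z by (auto simp: fun_eq_iff fun_sum_apply)
    finally have "\<forall>k<length vs. ?c k = 0" using L unfolding lindep_free_lc by blast
    moreover obtain k where "k < length vs" "vs ! k = v" using t(2) v by (metis in_set_conv_nth subsetD)
    ultimately show "u v = 0" using v by force
  qed
  have sp: "set vs \<subseteq> V.span (?ind ` S)"
  proof
    fix v assume "v \<in> set vs"
    then have sv: "supported v S" by (rule sup)
    have "v = (\<Sum>s\<in>S. (\<lambda>x. v s * ?ind s x))"
      using sv S by (auto simp: fun_eq_iff fun_sum_apply supported_def if_distrib cong: if_cong)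
    also have "\<dots> \<in> V.span (?ind ` S)"
      by (intro V.span_sum V.span_scale V.span_base) auto
    finally show "v \<in> V.span (?ind ` S)" .
  qed
  have "card (set vs) \<le> card (?ind ` S)" using V.independent_span_bound[OF _ indep sp] S by auto
  also have "\<dots> \<le> card S" by (rule card_image_le[OF S])
  finally show ?thesis using distinct_card[OF D] by simp
qed

definition subsp :: "('s \<Rightarrow> rat) set \<Rightarrow> bool" where
  "subsp W \<longleftrightarrow> (\<lambda>_. 0) \<in> W \<and> (\<forall>u\<in>W. \<forall>v\<in>W. \<forall>a b. (\<lambda>s. a * u s + b * v s) \<in> W)"

lemma subspD: "subsp W \<Longrightarrow> u \<in> W \<Longrightarrow> v \<in> W \<Longrightarrow> (\<lambda>s. a * u s + b * v s) \<in> W"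
  by (simp add: subsp_def)

lemma lc_snoc: "lc c (vs @ [v]) = (\<lambda>s. lc c vs s + c (length vs) * v s)"
  unfolding lc_append by (simp add: lc_def)

lemma subsp_lc: "subsp W \<Longrightarrow> set vs \<subseteq> W \<Longrightarrow> lc c vs \<in> W"
proof (induction vs rule: rev_induct)
  case Nil then show ?case by (simp add: subsp_def)
next
  case (snoc v vs)
  then have "(\<lambda>s. 1 * lc c vs s + c (length vs) * v s) \<in> W" by (intro subspD) auto
  then show ?case by (simp add: lc_snoc)
qed

lemma extend_basis:
  assumes S: "finite S" and Z: "subsp Z" and sup: "\<And>v. v \<in> Z \<Longrightarrow> supported v S"
  shows "lindep_free bs \<Longrightarrow> set bs \<subseteq> Z \<Longrightarrow> \<exists>cs. is_basis Z (bs @ cs)"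
proof (induction "card S - length bs" arbitrary: bs rule: less_induct)
  case less
  show ?case
  proof (cases "lspan bs = Z")
    case True then show ?thesis using less by (auto simp: is_basis_def intro!: exI[of _ "[]"])
  next
    case False
    have "lspan bs \<subseteq> Z" using subsp_lc[OF Z less(3)] by (auto simp: lspan_lc)
    with False obtain v where v: "v \<in> Z" "v \<notin> lspan bs" by blast
    have L: "lindep_free (bs @ [v])"
      unfolding lindep_free_lc
    proof (intro allI impI)
      fix c i assume z: "lc c (bs @ [v]) = (\<lambda>_. 0)" and i: "i < length (bs @ [v])"
      have z': "\<And>s. lc c bs s + c (length bs) * v s = 0" using z by (simp add: lc_snoc fun_eq_iff)
      have cn: "c (length bs) = 0"
      proof (rule ccontr)
        assume nz: "c (length bs) \<noteq> 0"
        have "v = lc (\<lambda>i. (- 1 / c (length bs)) * c i + 0 * c i) bs"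
          unfolding lc_lin using z' nz by (auto simp: fun_eq_iff field_simps add_eq_0_iff)
        then show False using v(2) by (auto simp: lspan_lc)
      qed
      then have "lc c bs = (\<lambda>_. 0)" using z' by (simp add: fun_eq_iff)
      then have "\<forall>i<length bs. c i = 0" using less(2) unfolding lindep_free_lc by blast
      then show "c i = 0" using i cn by (auto simp: nth_append less_Suc_eq)
    qed
    have "length (bs @ [v]) \<le> card S"
      by (rule lindep_bound[OF S L]) (use v less(3) sup in auto)
    then have "card S - length (bs @ [v]) < card S - length bs" by simp
    from less(1)[OF this L] v less(3) obtain cs where "is_basis Z ((bs @ [v]) @ cs)" by auto
    then show ?thesis by (intro exI[of _ "v # cs"]) simp
  qed
qed

lemma adapted_ok:
  assumes S: "finite S" and B: "subsp B" and Z: "subsp Z" and BZ: "B \<subseteq> Z"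
    and sup: "\<And>v. v \<in> Z \<Longrightarrow> supported v S"
  shows "is_basis B (fst (adapted_basis Z B)) \<and>
         is_basis Z (fst (adapted_basis Z B) @ snd (adapted_basis Z B))"
proof -
  obtain bs where bs: "is_basis B bs"
    using extend_basis[OF S B, of "[]"] sup BZ by (auto simp: lindep_free_def)
  have L0: "lindep_free bs" using bs by (simp add: is_basis_def)
  have "set bs \<subseteq> Z"
  proof
    fix v assume "v \<in> set bs"
    then obtain j where "j < length bs" "v = bs ! j" by (auto simp: in_set_conv_nth)
    then show "v \<in> Z" using basis_nth_mem[OF bs] BZ by auto
  qed
  then obtain cs where "is_basis Z (bs @ cs)" using extend_basis[OF S Z sup] L0 by blast
  then have "\<exists>p. is_basis B (fst p) \<and> is_basis Z (fst p @ snd p)" using bs by (intro exI[of _ "(bs, cs)"]) simp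
  then show ?thesis unfolding adapted_basis_def by (rule someI_ex)
qed

lemma basis_exists:
  assumes S: "finite S" and Z: "subsp Z" and sup: "\<And>v. v \<in> Z \<Longrightarrow> supported v S"
  shows "\<exists>vs. is_basis Z vs"
  using extend_basis[OF S Z sup, of "[]"] by (auto simp: lindep_free_def)

lemma basis_split_co:
  assumes Z: "is_basis Z zs" and C: "is_basis C (zs @ cs)" and f: "f (zs ! j) \<in> Z"
    and j: "j < length zs"
  shows "co (zs @ cs) (f (zs ! j)) j = co zs (f (zs ! j)) j"
proof -
  obtain d where d: "f (zs ! j) = lc d zs" using f Z basis_mem by blast
  have "lc d zs = lc (\<lambda>i. if i < length zs then d i else 0) (zs @ cs)"
    unfolding lc_append by (auto intro!: lc_cong[THEN fun_cong, THEN trans] simp: lc_def)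
  then have "co (zs @ cs) (f (zs ! j)) j = d j" using d co_lc[OF C, of j] j by simp
  moreover have "co zs (f (zs ! j)) j = d j" using d co_lc[OF Z j] by simp
  ultimately show ?thesis by simp
qed

lemma tr_split:
  assumes Z: "is_basis Z zs" and C: "is_basis C (zs @ cs)" and f: "\<And>v. v \<in> Z \<Longrightarrow> f v \<in> Z"
  shows "tr (zs @ cs) f = tr zs f + (\<Sum>j<length cs. co (zs @ cs) (f (cs ! j)) (length zs + j))"
  unfolding tr_def
proof -
  have "\<And>j. j < length zs \<Longrightarrow> co (zs @ cs) (f (zs ! j)) j = co zs (f (zs ! j)) j"
    using basis_split_co[OF Z C] f basis_nth_mem[OF Z] by blast
  then show "(\<Sum>j<length (zs @ cs). co (zs @ cs) (f ((zs @ cs) ! j)) j) =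
    (\<Sum>j<length zs. co zs (f (zs ! j)) j) + (\<Sum>j<length cs. co (zs @ cs) (f (cs ! j)) (length zs + j))"
    by (simp add: sum_lessThan_add nth_append)
qed

lemma quot_trace_eq:
  assumes "is_basis B (fst (adapted_basis Z B))"
    "is_basis Z (fst (adapted_basis Z B) @ snd (adapted_basis Z B))"
    "\<And>v. v \<in> B \<Longrightarrow> f v \<in> B"
  shows "quot_trace Z B f = tr (fst (adapted_basis Z B) @ snd (adapted_basis Z B)) f
           - tr (fst (adapted_basis Z B)) f"
  using tr_split[OF assms] unfolding quot_trace_def Let_def co_def by simp

lemma quot_dim_eq:
  assumes "is_basis B (fst (adapted_basis Z B))"
    "is_basis Z (fst (adapted_basis Z B) @ snd (adapted_basis Z B))"
  shows "of_nat (quot_dim Z B) = quot_trace Z B (\<lambda>x. x)"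
  using quot_trace_eq[OF assms, of "\<lambda>x. x"] tr_id[OF assms(1)] tr_id[OF assms(2)]
  unfolding quot_dim_def by simp

definition T :: "('s \<Rightarrow> rat) set \<Rightarrow> (('s \<Rightarrow> rat) \<Rightarrow> ('s \<Rightarrow> rat)) \<Rightarrow> rat" where
  "T W f = tr (SOME vs. is_basis W vs) f"

lemma T_eq:
  assumes "is_basis W vs" "lin f" "\<And>v. v \<in> W \<Longrightarrow> f v \<in> W"
  shows "T W f = tr vs f"
  unfolding T_def using tr_invariant[OF someI[of "is_basis W", OF assms(1)] assms(1) assms(2,3)] .

lemma kernel_lemma:
  assumes Z: "is_basis Z zs" and C: "is_basis C (zs @ cs)" and g: "lin g" and ZC: "Z \<subseteq> C"
    and ker: "\<And>c. c \<in> C \<Longrightarrow> g c = (\<lambda>_. 0) \<longleftrightarrow> c \<in> Z"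
    and fC: "\<And>c. c \<in> C \<Longrightarrow> f c \<in> C"
    and comm: "\<And>c. c \<in> C \<Longrightarrow> g (f c) = f' (g c)"
  shows "is_basis (g ` C) (map g cs) \<and>
    (\<Sum>j<length cs. co (zs @ cs) (f (cs ! j)) (length zs + j)) = tr (map g cs) f'"
proof -
  let ?n = "length zs"
  have shift: "lc a cs = lc (\<lambda>i. if i < ?n then 0 else a (i - ?n)) (zs @ cs)" for a
    unfolding lc_append by (auto simp: lc_def)
  have csC: "lc a cs \<in> C" for a by (simp only: shift[of a] basis_lc[OF C])
  have gsplit: "g c = lc (\<lambda>i. co (zs @ cs) c (?n + i)) (map g cs)" if c: "c \<in> C" for c
  proof -
    let ?d = "co (zs @ cs) c"
    have c_eq: "c = (\<lambda>s. 1 * lc ?d zs s + 1 * lc (\<lambda>i. ?d (?n + i)) cs s)"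
      using co_expand[OF C c] by (simp add: lc_append)
    have "g c = (\<lambda>s. 1 * g (lc ?d zs) s + 1 * g (lc (\<lambda>i. ?d (?n + i)) cs) s)"
      by (subst c_eq, rule linD[OF g])
    moreover have "g (lc ?d zs) = (\<lambda>_. 0)"
      using ker[of "lc ?d zs"] basis_lc[OF Z] ZC by blast
    ultimately show ?thesis using lin_lc[OF g] by simp
  qed
  have L: "lindep_free (map g cs)"
    unfolding lindep_free_lc
  proof (intro allI impI)
    fix a i assume z: "lc a (map g cs) = (\<lambda>_. 0)" and i: "i < length (map g cs)"
    have "g (lc a cs) = (\<lambda>_. 0)" using z lin_lc[OF g, of a cs] by simp
    then have "lc a cs \<in> Z" using ker csC by blast
    then obtain b where b: "lc a cs = lc b zs" using Z basis_mem by blast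
    define X where "X = (\<lambda>i. 1 * (if i < ?n then b i else 0) + (-1) * (if i < ?n then 0 else a (i - ?n)))"
    have "lc X (zs @ cs) = (\<lambda>_. 0)"
      unfolding X_def lc_lin using shift[of a] b
      by (simp add: lc_append) (simp add: lc_def)
    then have "X (?n + i) = (\<lambda>_. 0) (?n + i)"
      using basis_uniq[OF C, of X "\<lambda>_. 0" "?n + i"] i by simp
    then have "X (?n + i) = 0" by simp
    then show "a i = 0" by (simp add: X_def)
  qed
  have SP: "lspan (map g cs) = g ` C"
  proof
    show "lspan (map g cs) \<subseteq> g ` C"
      unfolding lspan_lc using lin_lc[OF g] csC by (auto intro!: image_eqI)
    show "g ` C \<subseteq> lspan (map g cs)" unfolding lspan_lc using gsplit by auto
  qed
  have Bas: "is_basis (g ` C) (map g cs)" using L SP by (simp add: is_basis_def)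
  have "co (zs @ cs) (f (cs ! j)) (?n + j) = co (map g cs) (f' (map g cs ! j)) j" if j: "j < length cs" for j
  proof -
    have cj: "cs ! j \<in> C" using basis_nth_mem[OF C, of "?n + j"] j by (simp add: nth_append)
    have "f' (map g cs ! j) = g (f (cs ! j))" using comm[OF cj] j by simp
    also have "\<dots> = lc (\<lambda>i. co (zs @ cs) (f (cs ! j)) (?n + i)) (map g cs)"
      by (rule gsplit[OF fC[OF cj]])
    finally show ?thesis using co_lc[OF Bas, of j] j by simp
  qed
  then show ?thesis using Bas by (simp add: tr_def)
qed

lemma bd_lin: "lin (bd D k)"
  unfolding lin_def bd_def
  by (auto simp: fun_eq_iff sum.distrib sum_distrib_left algebra_simps)

lemma if_add0: "(if P then x + y else 0) = (if P then x else 0) + (if P then y else (0::rat))"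
  by simp

lemma if_mult0: "(if P then a * x else 0) = a * (if P then x else (0::rat))"
  by simp

lemma chain_map_lin: "lin (chain_map D Fo Fm k)"
  unfolding lin_def chain_map_def
  by (simp add: fun_eq_iff if_add0 if_mult0 sum.distrib sum_distrib_left)

lemma subsp_chains: "subsp (chains D k)"
  unfolding subsp_def chains_def supported_def by (auto, metis add_0 mult_zero_right)

lemma subsp_kernel: "subsp C \<Longrightarrow> lin g \<Longrightarrow> subsp {c \<in> C. g c = (\<lambda>_. 0)}"
  unfolding subsp_def by (auto simp: lin_zero linD)

lemma subsp_image: "subsp C \<Longrightarrow> lin g \<Longrightarrow> subsp (g ` C)"
proof -
  assume C: "subsp C" and g: "lin g"
  have "(\<lambda>_. 0) \<in> g ` C" using C lin_zero[OF g] by (auto simp: subsp_def intro!: rev_image_eqI)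
  moreover have "(\<lambda>s. a * u s + b * v s) \<in> g ` C" if "u \<in> g ` C" "v \<in> g ` C" for u v a b
  proof -
    from that(1) obtain x where x: "x \<in> C" "u = g x" by blast
    from that(2) obtain y where y: "y \<in> C" "v = g y" by blast
    note xy = x(1) y(1) x(2) y(2)
    have "(\<lambda>s. a * u s + b * v s) = g (\<lambda>s. a * x s + b * y s)" using linD[OF g] xy by simp
    then show ?thesis using subspD[OF C xy(1,2)] by simp
  qed
  ultimately show ?thesis unfolding subsp_def by blast
qed

lemma tele_st: "A = X - s * b \<Longrightarrow> q = c - b - b' \<Longrightarrow> A + (-s) * q = X + (-s) * c - (-s) * (b'::rat)"
proof -
  assume h1: "A = X - s * b" and h2: "q = c - b - b'"
  show ?thesis unfolding h1 h2 by (simp add: algebra_simps)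
qed

lemma basis_zero: "is_basis {\<lambda>_. 0} []"
  by (simp add: is_basis_def lspan_lc lindep_free_lc)

locale hopf_setting =
  fixes D :: "('o, 'm) cat" and f :: "nat \<Rightarrow> ('o \<times> 'm list \<Rightarrow> rat) \<Rightarrow> ('o \<times> 'm list \<Rightarrow> rat)"
  assumes fin: "\<And>k. finite (Simp D k)"
    and bd_ch: "\<And>k c. c \<in> chains D (Suc k) \<Longrightarrow> bd D (Suc k) c \<in> chains D k"
    and bdbd: "\<And>k c. c \<in> chains D (Suc (Suc k)) \<Longrightarrow> bd D (Suc k) (bd D (Suc (Suc k)) c) = (\<lambda>_. 0)"
    and f_lin: "\<And>k. lin (f k)"
    and f_ch: "\<And>k c. c \<in> chains D k \<Longrightarrow> f k c \<in> chains D k"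
    and comm: "\<And>k c. c \<in> chains D (Suc k) \<Longrightarrow> bd D (Suc k) (f (Suc k) c) = f k (bd D (Suc k) c)"
begin

lemma cyc_sub: "subsp (cycles D k)"
  unfolding cycles_def by (rule subsp_kernel[OF subsp_chains bd_lin])

lemma bnd_sub: "subsp (boundaries D k)"
  unfolding boundaries_def by (rule subsp_image[OF subsp_chains bd_lin])

lemma cyc_ch: "cycles D k \<subseteq> chains D k" by (auto simp: cycles_def)

lemma bnd_cyc: "boundaries D k \<subseteq> cycles D k"
proof
  fix b assume "b \<in> boundaries D k"
  then obtain c where c: "c \<in> chains D (Suc k)" "b = bd D (Suc k) c" by (auto simp: boundaries_def)
  have "bd D k b = (\<lambda>_. 0)"
  proof (cases k)
    case 0 then show ?thesis by (simp add: bd_def)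
  next
    case (Suc k') then show ?thesis using bdbd c by simp
  qed
  then show "b \<in> cycles D k" using bd_ch c by (simp add: cycles_def)
qed

lemma sup_ch: "v \<in> chains D k \<Longrightarrow> supported v (Simp D k)" by (simp add: chains_def)

lemma f_cyc: "c \<in> cycles D k \<Longrightarrow> f k c \<in> cycles D k"
proof -
  assume c: "c \<in> cycles D k"
  have "bd D k (f k c) = (\<lambda>_. 0)"
  proof (cases k)
    case 0 then show ?thesis by (simp add: bd_def)
  next
    case (Suc k')
    then show ?thesis using comm[of c k'] c lin_zero[OF f_lin] by (simp add: cycles_def)
  qed
  then show ?thesis using f_ch c by (simp add: cycles_def)
qed

lemma f_bnd: "c \<in> boundaries D k \<Longrightarrow> f k c \<in> boundaries D k"
  unfolding boundaries_def using comm f_ch by (auto simp flip: comm)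

lemma qt_eq: "quot_trace (cycles D k) (boundaries D k) (f k) =
    T (cycles D k) (f k) - T (boundaries D k) (f k)"
proof -
  have A: "is_basis (boundaries D k) (fst (adapted_basis (cycles D k) (boundaries D k))) \<and>
         is_basis (cycles D k) (fst (adapted_basis (cycles D k) (boundaries D k)) @ snd (adapted_basis (cycles D k) (boundaries D k)))"
    by (rule adapted_ok[OF fin bnd_sub cyc_sub bnd_cyc]) (use cyc_ch sup_ch in auto)
  note e1 = quot_trace_eq[OF A[THEN conjunct1] A[THEN conjunct2] f_bnd]
  note e2 = T_eq[OF A[THEN conjunct1] f_lin f_bnd]
  note e3 = T_eq[OF A[THEN conjunct2] f_lin f_cyc]
  show ?thesis by (simp only: e1 e2 e3)
qed

lemma T_chains_Suc: "T (chains D (Suc k)) (f (Suc k)) = T (cycles D (Suc k)) (f (Suc k)) + T (boundaries D k) (f k)"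
proof -
  obtain zs where zs: "is_basis (cycles D (Suc k)) zs"
    using basis_exists[OF fin cyc_sub] cyc_ch sup_ch by blast
  have L0: "lindep_free zs" using zs by (simp add: is_basis_def)
  have "set zs \<subseteq> chains D (Suc k)"
  proof
    fix v assume "v \<in> set zs"
    then obtain j where "j < length zs" "v = zs ! j" by (auto simp: in_set_conv_nth)
    then show "v \<in> chains D (Suc k)" using basis_nth_mem[OF zs] cyc_ch by auto
  qed
  with L0 obtain cs where cs: "is_basis (chains D (Suc k)) (zs @ cs)"
    using extend_basis[OF fin subsp_chains] sup_ch by blast
  have K: "is_basis (bd D (Suc k) ` chains D (Suc k)) (map (bd D (Suc k)) cs) \<and>
    (\<Sum>j<length cs. co (zs @ cs) (f (Suc k) (cs ! j)) (length zs + j)) = tr (map (bd D (Suc k)) cs) (f k)"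
    by (rule kernel_lemma[OF zs cs bd_lin cyc_ch]) (auto simp: cycles_def f_ch comm)
  have "T (chains D (Suc k)) (f (Suc k)) = tr (zs @ cs) (f (Suc k))"
    by (rule T_eq[OF cs f_lin f_ch])
  also have "\<dots> = tr zs (f (Suc k)) + tr (map (bd D (Suc k)) cs) (f k)"
    using tr_split[OF zs cs f_cyc] K by simp
  also have "tr zs (f (Suc k)) = T (cycles D (Suc k)) (f (Suc k))"
    by (rule T_eq[OF zs f_lin f_cyc, symmetric])
  also have "tr (map (bd D (Suc k)) cs) (f k) = T (boundaries D k) (f k)"
    using T_eq[OF K[THEN conjunct1] f_lin f_bnd[unfolded boundaries_def]] by (simp add: boundaries_def)
  finally show ?thesis .
qed

lemma T_chains_0: "T (chains D 0) (f 0) = T (cycles D 0) (f 0)"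
proof -
  have "cycles D 0 = chains D 0" by (auto simp: cycles_def bd_def)
  then show ?thesis by simp
qed

lemma telescope:
  "(\<Sum>i\<le>N. (-1) ^ i * quot_trace (cycles D i) (boundaries D i) (f i)) =
   (\<Sum>i\<le>N. (-1) ^ i * T (chains D i) (f i)) - (-1) ^ N * T (boundaries D N) (f N)"
proof (induction N)
  case 0 then show ?case using qt_eq[of 0] T_chains_0 by simp
next
  case (Suc N)
  define s :: rat where "s = (-1) ^ N"
  have s1: "(-1) ^ Suc N = - s" by (simp add: s_def)
  have e1: "quot_trace (cycles D (Suc N)) (boundaries D (Suc N)) (f (Suc N)) =
    T (chains D (Suc N)) (f (Suc N)) - T (boundaries D N) (f N) - T (boundaries D (Suc N)) (f (Suc N))"
    using qt_eq[of "Suc N"] T_chains_Suc[of N] by simp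
  show ?case unfolding sum.atMost_Suc s1
    by (rule tele_st[OF Suc.IH[folded s_def] e1])
qed

lemma hopf:
  assumes "Simp D (Suc N) = {}"
  shows "(\<Sum>i\<le>N. (-1) ^ i * quot_trace (cycles D i) (boundaries D i) (f i)) =
         (\<Sum>i\<le>N. (-1) ^ i * T (chains D i) (f i))"
proof -
  have "chains D (Suc N) = {\<lambda>_. 0}" using assms by (auto simp: chains_def supported_def)
  then have "boundaries D N = {\<lambda>_. 0}" using lin_zero[OF bd_lin] by (simp add: boundaries_def)
  then have "T (boundaries D N) (f N) = 0" using T_eq[OF basis_zero f_lin] lin_zero[OF f_lin]
    by (simp add: tr_def)
  then show ?thesis using telescope[of N] by simp
qed

end

locale acat =
  fixes D :: "('o, 'm) cat"
  assumes acyc: "acyclic_cat D"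
begin

lemma cat: "is_category D" using acyc by (simp add: acyclic_cat_def)

lemma dm_ob: "a \<in> Mor D \<Longrightarrow> Dm D a \<in> Ob D" using cat by (simp add: is_category_def)
lemma cd_ob: "a \<in> Mor D \<Longrightarrow> Cd D a \<in> Ob D" using cat by (simp add: is_category_def)
lemma id_mor: "x \<in> Ob D \<Longrightarrow> Idt D x \<in> Mor D" using cat by (simp add: is_category_def)
lemma dm_id: "x \<in> Ob D \<Longrightarrow> Dm D (Idt D x) = x" using cat by (simp add: is_category_def)
lemma cd_id: "x \<in> Ob D \<Longrightarrow> Cd D (Idt D x) = x" using cat by (simp add: is_category_def)
lemma cmp_mor: "a \<in> Mor D \<Longrightarrow> b \<in> Mor D \<Longrightarrow> Cd D a = Dm D b \<Longrightarrow> Cmp D b a \<in> Mor D"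
  using cat by (simp add: is_category_def)
lemma dm_cmp: "a \<in> Mor D \<Longrightarrow> b \<in> Mor D \<Longrightarrow> Cd D a = Dm D b \<Longrightarrow> Dm D (Cmp D b a) = Dm D a"
  using cat by (simp add: is_category_def)
lemma cd_cmp: "a \<in> Mor D \<Longrightarrow> b \<in> Mor D \<Longrightarrow> Cd D a = Dm D b \<Longrightarrow> Cd D (Cmp D b a) = Cd D b"
  using cat by (simp add: is_category_def)
lemma assoc: "a \<in> Mor D \<Longrightarrow> b \<in> Mor D \<Longrightarrow> c \<in> Mor D \<Longrightarrow> Cd D a = Dm D b \<Longrightarrow> Cd D b = Dm D c \<Longrightarrow>
    Cmp D c (Cmp D b a) = Cmp D (Cmp D c b) a"
  using cat unfolding is_category_def by blast
lemma id_left: "a \<in> Mor D \<Longrightarrow> Cmp D (Idt D (Cd D a)) a = a" using cat by (simp add: is_category_def)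
lemma id_right: "a \<in> Mor D \<Longrightarrow> Cmp D a (Idt D (Dm D a)) = a" using cat by (simp add: is_category_def)

lemma endo_id: "a \<in> Mor D \<Longrightarrow> Dm D a = Cd D a \<Longrightarrow> is_identity D a"
  using acyc by (simp add: acyclic_cat_def)

lemma comp_nonid:
  assumes a: "a \<in> Mor D" and b: "b \<in> Mor D" and ab: "Cd D a = Dm D b"
    and na: "\<not> is_identity D a"
  shows "\<not> is_identity D (Cmp D b a)"
proof
  assume idc: "is_identity D (Cmp D b a)"
  then have e1: "Cmp D b a = Idt D (Dm D a)" using dm_cmp[OF a b ab] by (simp add: is_identity_def)
  then have "Cd D b = Dm D a" using cd_cmp[OF a b ab] cd_id[OF dm_ob[OF a]] by simp
  then have ba: "Cd D b = Dm D a" .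
  have m: "Cmp D a b \<in> Mor D" using cmp_mor[OF b a] ba by simp
  have "is_identity D (Cmp D a b)" using endo_id[OF m] dm_cmp[OF b a] cd_cmp[OF b a] ba ab by simp
  then have e2: "Cmp D a b = Idt D (Cd D a)" using dm_cmp[OF b a] ba ab by (simp add: is_identity_def)
  have inv: "\<forall>a\<in>Mor D. (\<exists>b\<in>Mor D. Dm D b = Cd D a \<and> Cd D b = Dm D a \<and>
         Cmp D b a = Idt D (Dm D a) \<and> Cmp D a b = Idt D (Cd D a)) \<longrightarrow> is_identity D a"
    using acyc unfolding acyclic_cat_def by blast
  have "is_identity D a"
    by (rule inv[rule_format, OF a], rule bexI[of _ b]) (use ab ba e1 e2 b in auto)
  then show False using na by simp
qed

lemma Simp_iff:
  "(x, ms) \<in> Simp D k \<longleftrightarrow> length ms = k \<and> (k = 0 \<longrightarrow> x \<in> Ob D) \<and> (0 < k \<longrightarrow> x = Dm D (ms ! 0)) \<and>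
     (\<forall>p<k. ms ! p \<in> Mor D \<and> \<not> is_identity D (ms ! p)) \<and>
     (\<forall>p. Suc p < k \<longrightarrow> Cd D (ms ! p) = Dm D (ms ! Suc p))"
proof -
  have e: "set ms \<subseteq> Mor D \<longleftrightarrow> (\<forall>p<length ms. ms ! p \<in> Mor D)"
    by (auto simp: in_set_conv_nth) (meson nth_mem subsetD)
  show ?thesis unfolding Simp_def
    by (simp only: e all_set_conv_all_nth mem_Collect_eq prod.case) (auto simp: hd_conv_nth)
qed

lemma ob_fin: "finite (Mor D) \<Longrightarrow> finite (Ob D)"
proof -
  assume f: "finite (Mor D)"
  have "Ob D \<subseteq> Dm D ` Mor D" using dm_id id_mor by (auto intro!: rev_image_eqI)
  then show ?thesis using f finite_surj by blast
qed

lemma ob_card: "finite (Mor D) \<Longrightarrow> card (Ob D) \<le> card (Mor D)"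
proof -
  assume f: "finite (Mor D)"
  have "inj_on (Idt D) (Ob D)" using dm_id by (metis inj_onI)
  then show ?thesis using card_inj_on_le[of "Idt D" "Ob D" "Mor D"] id_mor f by auto
qed

lemma Simp_fin: "finite (Mor D) \<Longrightarrow> finite (Simp D k)"
proof -
  assume f: "finite (Mor D)"
  have "Simp D k \<subseteq> Ob D \<times> {ms. set ms \<subseteq> Mor D \<and> length ms = k}"
  proof
    fix s assume s: "s \<in> Simp D k"
    obtain x ms where xm: "s = (x, ms)" by (cases s)
    have S: "length ms = k" "k = 0 \<longrightarrow> x \<in> Ob D" "0 < k \<longrightarrow> x = Dm D (ms ! 0)"
      "\<forall>p<k. ms ! p \<in> Mor D" using s xm by (simp_all add: Simp_iff)
    have "x \<in> Ob D" using S dm_ob by (cases "k = 0") auto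
    moreover have "set ms \<subseteq> Mor D" using S by (auto simp: in_set_conv_nth)
    ultimately show "s \<in> Ob D \<times> {ms. set ms \<subseteq> Mor D \<and> length ms = k}" using xm S by simp
  qed
  moreover have "finite (Ob D \<times> {ms. set ms \<subseteq> Mor D \<and> length ms = k})"
    using ob_fin[OF f] f by (simp add: finite_lists_length_eq)
  ultimately show ?thesis using finite_subset by blast
qed

lemma path:
  assumes s: "(x, ms) \<in> Simp D k" and jl: "j < l" "l \<le> k"
  shows "\<exists>a\<in>Mor D. Dm D a = vert D (x, ms) j \<and> Cd D a = vert D (x, ms) l \<and> \<not> is_identity D a"
  using jl
proof (induction l)
  case 0 then show ?case by simp
next
  case (Suc l)
  have S: "length ms = k" "0 < k \<longrightarrow> x = Dm D (ms ! 0)"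
    "\<forall>p<k. ms ! p \<in> Mor D \<and> \<not> is_identity D (ms ! p)"
    "\<forall>p. Suc p < k \<longrightarrow> Cd D (ms ! p) = Dm D (ms ! Suc p)" using s by (simp_all add: Simp_iff)
  have vl: "vert D (x, ms) l = Dm D (ms ! l)"
    using S Suc.prems by (cases l) (auto simp: vert_def)
  show ?case
  proof (cases "j = l")
    case True
    then show ?thesis using S Suc.prems vl by (auto simp: vert_def intro!: bexI[of _ "ms ! l"])
  next
    case False
    then obtain a where a: "a \<in> Mor D" "Dm D a = vert D (x, ms) j" "Cd D a = vert D (x, ms) l" "\<not> is_identity D a"
      using Suc by auto
    have ml: "ms ! l \<in> Mor D" using S Suc.prems by auto
    have c: "Cd D a = Dm D (ms ! l)" using a vl by simp
    show ?thesis
      using cmp_mor[OF a(1) ml c] dm_cmp[OF a(1) ml c] cd_cmp[OF a(1) ml c] comp_nonid[OF a(1) ml c a(4)] a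
      by (auto simp: vert_def intro!: bexI[of _ "Cmp D (ms ! l) a"])
  qed
qed

lemma vert_ob: "(x, ms) \<in> Simp D k \<Longrightarrow> j \<le> k \<Longrightarrow> vert D (x, ms) j \<in> Ob D"
  by (cases j) (auto simp: vert_def Simp_iff intro: cd_ob dm_ob)

lemma Simp_empty:
  assumes f: "finite (Mor D)" and k: "card (Mor D) \<le> k"
  shows "Simp D k = {}"
proof (rule ccontr)
  assume "Simp D k \<noteq> {}"
  then obtain x ms where s: "(x, ms) \<in> Simp D k" by auto
  have inj: "inj_on (vert D (x, ms)) {..k}"
  proof (rule inj_onI, rule ccontr)
    fix j l assume j: "j \<in> {..k}" "l \<in> {..k}" "vert D (x, ms) j = vert D (x, ms) l" "j \<noteq> l"
    then consider "j < l" | "l < j" by linarith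
    then show False
    proof cases
      case 1
      then obtain a where "a \<in> Mor D" "Dm D a = Cd D a" "\<not> is_identity D a" using path[OF s 1] j by auto
      then show False using endo_id by blast
    next
      case 2
      then obtain a where "a \<in> Mor D" "Dm D a = Cd D a" "\<not> is_identity D a" using path[OF s 2] j by auto
      then show False using endo_id by blast
    qed
  qed
  have "vert D (x, ms) ` {..k} \<subseteq> Ob D" using vert_ob[OF s] by auto
  then have "card {..k} \<le> card (Ob D)" using card_inj_on_le[OF inj] ob_fin[OF f] by blast
  then show False using ob_card[OF f] k by simp
qed

end

lemma face_fst: "fst (face D s i) = (if i = 0 then Cd D (snd s ! 0) else fst s)"
  by (simp add: face_def Let_def vert_def)

lemma face_len: "0 < length (snd s) \<Longrightarrow> i \<le> length (snd s) \<Longrightarrow> length (snd (face D s i)) = length (snd s) - 1"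
  by (auto simp: face_def Let_def)

lemma face_nth:
  assumes "i \<le> length (snd s)" "p < length (snd s) - 1"
  shows "snd (face D s i) ! p = (if Suc p < i then snd s ! p else if Suc p = i then Cmp D (snd s ! i) (snd s ! (i - 1))
     else snd s ! Suc p)"
  using assms by (auto simp: face_def Let_def nth_tl nth_butlast nth_append min_def)

lemma pair_cancel:
  fixes g :: "nat \<Rightarrow> nat \<Rightarrow> rat"
  assumes h: "\<And>i j. j < i \<Longrightarrow> i \<le> Suc m \<Longrightarrow> g j (i - 1) = - g i j"
  shows "(\<Sum>i\<le>Suc m. \<Sum>j\<le>m. g i j) = 0"
proof -
  let ?P = "{..Suc m} \<times> {..m}"
  let ?A = "?P \<inter> {p. snd p < fst p}" and ?B = "?P - {p. snd p < fst p}"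
  have "(\<Sum>i\<le>Suc m. \<Sum>j\<le>m. g i j) = (\<Sum>p\<in>?P. g (fst p) (snd p))"
    by (simp add: sum.cartesian_product split_beta)
  also have "\<dots> = (\<Sum>p\<in>?A. g (fst p) (snd p)) + (\<Sum>p\<in>?B. g (fst p) (snd p))"
    by (rule sum.Int_Diff) auto
  also have "(\<Sum>p\<in>?B. g (fst p) (snd p)) = (\<Sum>p\<in>?A. g (snd p) (fst p - 1))"
  proof -
    have "bij_betw (\<lambda>p. (snd p, fst p - 1)) ?A ?B"
    proof (rule bij_betw_imageI)
      show "inj_on (\<lambda>p. (snd p, fst p - 1)) ?A" by (auto simp: inj_on_def)
      show "(\<lambda>p. (snd p, fst p - 1)) ` ?A = ?B"
      proof
        show "(\<lambda>p. (snd p, fst p - 1)) ` ?A \<subseteq> ?B" by auto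
        show "?B \<subseteq> (\<lambda>p. (snd p, fst p - 1)) ` ?A"
        proof
          fix p assume "p \<in> ?B"
          then show "p \<in> (\<lambda>p. (snd p, fst p - 1)) ` ?A"
            by (intro image_eqI[of _ _ "(Suc (snd p), fst p)"]) auto
        qed
      qed
    qed
    from sum.reindex_bij_betw[OF this, of "\<lambda>p. g (fst p) (snd p)"] show ?thesis by simp
  qed
  also have "\<dots> = (\<Sum>p\<in>?A. - g (fst p) (snd p))" 
  proof (rule sum.cong[OF refl])
    fix p assume "p \<in> ?A"
    then obtain a b where p: "p = (a, b)" "b < a" "a \<le> Suc m" by auto
    show "g (snd p) (fst p - 1) = - g (fst p) (snd p)" using h[OF p(2,3)] p(1) by simp
  qed
  finally show ?thesis by (simp add: sum_negf)
qed

context acat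
begin

lemma face_Simp:
  assumes s: "s \<in> Simp D (Suc k)" and i: "i \<le> Suc k"
  shows "face D s i \<in> Simp D k"
proof -
  obtain x ms where xm: "s = (x, ms)" by (cases s)
  have S: "length ms = Suc k" "x = Dm D (ms ! 0)"
    "\<And>p. p < Suc k \<Longrightarrow> ms ! p \<in> Mor D" "\<And>p. p < Suc k \<Longrightarrow> \<not> is_identity D (ms ! p)"
    "\<And>p. Suc p < Suc k \<Longrightarrow> Cd D (ms ! p) = Dm D (ms ! Suc p)" using s xm by (simp_all add: Simp_iff)
  obtain y ns where yn: "face D s i = (y, ns)" by (cases "face D s i")
  have y: "y = (if i = 0 then Cd D (ms ! 0) else x)" using face_fst[of D s i] yn xm by simp
  have len: "length ns = k" using face_len[of s i D] yn xm S i by simp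
  have nth: "\<And>p. p < k \<Longrightarrow> ns ! p = (if Suc p < i then ms ! p else if Suc p = i then Cmp D (ms ! i) (ms ! (i - 1))
     else ms ! Suc p)" using face_nth[of i s _ D] yn xm S i by simp
  have cmpok: "Cmp D (ms ! i) (ms ! (i - 1)) \<in> Mor D \<and> \<not> is_identity D (Cmp D (ms ! i) (ms ! (i - 1))) \<and>
      Dm D (Cmp D (ms ! i) (ms ! (i - 1))) = Dm D (ms ! (i - 1)) \<and> Cd D (Cmp D (ms ! i) (ms ! (i - 1))) = Cd D (ms ! i)"
    if "0 < i" "i < Suc k" for i
  proof -
    have a: "ms ! (i - 1) \<in> Mor D" "ms ! i \<in> Mor D" "Cd D (ms ! (i - 1)) = Dm D (ms ! i)"
      using S that by auto
    show ?thesis using cmp_mor[OF a] comp_nonid[OF a S(4)] dm_cmp[OF a] cd_cmp[OF a] that by simp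
  qed
  have "k = 0 \<longrightarrow> y \<in> Ob D" using y S cd_ob dm_ob by auto
  moreover have "0 < k \<longrightarrow> y = Dm D (ns ! 0)"
    using y nth[of 0] S(2) S(5)[of 0] cmpok[of 1] by (cases "i = Suc 0") auto
  moreover have "\<forall>p<k. ns ! p \<in> Mor D \<and> \<not> is_identity D (ns ! p)"
    using nth S(3,4) cmpok i by auto
  moreover have "\<forall>p. Suc p < k \<longrightarrow> Cd D (ns ! p) = Dm D (ns ! Suc p)"
  proof (intro allI impI)
    fix p assume p: "Suc p < k"
    consider "Suc (Suc p) < i" | "Suc (Suc p) = i" | "Suc p = i" | "i < Suc p" by linarith
    then show "Cd D (ns ! p) = Dm D (ns ! Suc p)"
    proof cases
      case 1 then show ?thesis using nth[of p] nth[of "Suc p"] p S(5) by simp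
    next
      case 2 then show ?thesis using nth[of p] nth[of "Suc p"] p S(5) cmpok[of i] by (simp add: 2[symmetric])
    next
      case 3 then show ?thesis using nth[of p] nth[of "Suc p"] p S(5)[of "Suc p"] cmpok[of i] by (simp add: 3[symmetric])
    next
      case 4 then show ?thesis using nth[of p] nth[of "Suc p"] p S(5)[of "Suc p"] by simp
    qed
  qed
  ultimately show ?thesis using yn len by (simp add: Simp_iff)
qed

end

context acat
begin

lemma face_face:
  assumes s: "s \<in> Simp D (Suc (Suc k))" and ji: "j < i" "i \<le> Suc (Suc k)"
  shows "face D (face D s i) j = face D (face D s j) (i - 1)"
proof -
  obtain x ms where xm: "s = (x, ms)" by (cases s)
  have S: "length ms = Suc (Suc k)" "x = Dm D (ms ! 0)"
    "\<And>p. p < Suc (Suc k) \<Longrightarrow> ms ! p \<in> Mor D"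
    "\<And>p. Suc p < Suc (Suc k) \<Longrightarrow> Cd D (ms ! p) = Dm D (ms ! Suc p)" using s xm by (simp_all add: Simp_iff)
  have li: "length (snd (face D s i)) = Suc k" and lj: "length (snd (face D s j)) = Suc k"
    using face_len[of s i D] face_len[of s j D] xm S ji by auto
  have A: "\<And>q. q < Suc k \<Longrightarrow> snd (face D s i) ! q = (if Suc q < i then ms ! q else if Suc q = i then Cmp D (ms ! i) (ms ! (i - 1)) else ms ! Suc q)"
    using face_nth[of i s _ D] xm S ji by simp
  have B: "\<And>q. q < Suc k \<Longrightarrow> snd (face D s j) ! q = (if Suc q < j then ms ! q else if Suc q = j then Cmp D (ms ! j) (ms ! (j - 1)) else ms ! Suc q)"
    using face_nth[of j s _ D] xm S ji by simp
  have L: "\<And>p. p < k \<Longrightarrow> snd (face D (face D s i) j) ! p = (if Suc p < j then snd (face D s i) ! p else if Suc p = j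
       then Cmp D (snd (face D s i) ! j) (snd (face D s i) ! (j - 1)) else snd (face D s i) ! Suc p)"
    using face_nth[of j "face D s i" _ D] li ji by simp
  have R: "\<And>p. p < k \<Longrightarrow> snd (face D (face D s j) (i - 1)) ! p = (if Suc p < i - 1 then snd (face D s j) ! p else if Suc p = i - 1
       then Cmp D (snd (face D s j) ! (i - 1)) (snd (face D s j) ! (i - 1 - 1)) else snd (face D s j) ! Suc p)"
    using face_nth[of "i - 1" "face D s j" _ D] lj ji by simp
  have snd_eq: "snd (face D (face D s i) j) = snd (face D (face D s j) (i - 1))"
  proof (rule nth_equalityI)
    show "length (snd (face D (face D s i) j)) = length (snd (face D (face D s j) (i - 1)))"
      using face_len[of "face D s i" j D] face_len[of "face D s j" "i - 1" D] li lj ji by simp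
    then have len: "length (snd (face D (face D s i) j)) = k"
      using face_len[of "face D s i" j D] li ji by simp
    fix p assume "p < length (snd (face D (face D s i) j))"
    then have p: "p < k" using len by simp
    consider "Suc p < j" | "Suc p = j" "Suc j < i" | "Suc p = j" "Suc j = i" | "j < Suc p" "Suc p < i - 1"
      | "j < Suc p" "Suc p = i - 1" | "j < Suc p" "i - 1 < Suc p" using ji by linarith
    then show "snd (face D (face D s i) j) ! p = snd (face D (face D s j) (i - 1)) ! p"
    proof cases
      case 1
      then have "Suc p < i - 1" "Suc p < i" using ji by linarith+
      then show ?thesis using L[OF p] R[OF p] A B p ji 1 by simp
    next
      case 2
      then have "Suc p < i - 1" "Suc p < i" "j < i" "Suc j < i" "p < i" "j - Suc 0 = p" "j < Suc k" using ji p by linarith+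
      then show ?thesis using L[OF p] R[OF p] A[of j] A[of p] B[of p] p ji 2 by simp
    next
      case 3
      have a: "ms ! (j - 1) \<in> Mor D" "ms ! j \<in> Mor D" "ms ! i \<in> Mor D"
        "Cd D (ms ! (j - 1)) = Dm D (ms ! j)" "Cd D (ms ! j) = Dm D (ms ! i)"
        using S 3 p by (auto simp flip: 3)
      have as: "Cmp D (ms ! i) (Cmp D (ms ! j) (ms ! (j - 1))) = Cmp D (Cmp D (ms ! i) (ms ! j)) (ms ! (j - 1))"
        by (rule assoc[OF a])
      have e: "i - 1 = j" "Suc p = j" "j - 1 = p" "Suc j = i" using 3 by auto
      have "snd (face D (face D s i) j) ! p = Cmp D (Cmp D (ms ! i) (ms ! j)) (ms ! p)"
        using L[OF p] A[of j] A[of p] 3 p e by simp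
      moreover have "snd (face D (face D s j) (i - 1)) ! p = Cmp D (ms ! i) (Cmp D (ms ! j) (ms ! p))"
        using R[OF p] B[of j] B[of p] 3 p e by simp
      ultimately show ?thesis using as e by simp
    next
      case 4
      then have "\<not> Suc p < j" "Suc p \<noteq> j" "Suc (Suc p) < i" "Suc p < i - 1" using ji by linarith+
      then show ?thesis using L[OF p] R[OF p] A[of "Suc p"] B[of p] p ji 4 by simp
    next
      case 5
      then have "\<not> Suc p < j" "Suc p \<noteq> j" "Suc (Suc p) = i" "\<not> Suc p < i - 1" "i - 1 - 1 = p" "i - 1 = Suc p" "Suc p < Suc k"
        using ji p by linarith+
      then show ?thesis using L[OF p] R[OF p] A[of "Suc p"] B[of p] B[of "Suc p"] p ji 5 by simp
    next
      case 6
      then have "\<not> Suc p < j" "Suc p \<noteq> j" "\<not> Suc (Suc p) < i" "Suc (Suc p) \<noteq> i" "\<not> Suc p < i - 1" "Suc p \<noteq> i - 1"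
        "Suc p < Suc k" using ji p by linarith+
      then show ?thesis using L[OF p] R[OF p] A[of "Suc p"] B[of "Suc p"] p ji 6 by simp
    qed
  qed
  have fst_eq: "fst (face D (face D s i) j) = fst (face D (face D s j) (i - 1))"
  proof (cases "j = 0")
    case True
    then show ?thesis using face_fst[of D "face D s i" j] face_fst[of D "face D s j" "i - 1"] face_fst[of D s j]
      face_fst[of D s i] A[of 0] B[of 0] ji xm S(4)[of 0]
      by (cases "i = 1") (auto simp: cd_cmp S(3))
  next
    case False
    then show ?thesis using face_fst[of D "face D s i" j] face_fst[of D "face D s j" "i - 1"] face_fst[of D s j]
      face_fst[of D s i] ji by simp
  qed
  show ?thesis using fst_eq snd_eq by (simp add: prod_eq_iff)
qed

end

lemma sum_delta_mult:
  assumes "finite U" "v \<in> U"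
  shows "(\<Sum>u\<in>U. (if v = u then a else 0) * (B u :: rat)) = a * B v"
proof -
  have "(\<Sum>u\<in>U. (if v = u then a else 0) * B u) = (\<Sum>u\<in>U. if v = u then a * B u else 0)"
    by (rule sum.cong) auto
  also have "\<dots> = a * B v" using assms by (simp add: sum.delta)
  finally show ?thesis .
qed

context acat
begin

lemma bd_bd:
  assumes fin: "finite (Mor D)"
  shows "bd D (Suc k) (bd D (Suc (Suc k)) c) = (\<lambda>_. 0)"
proof
  fix t
  define B where "B u = (\<Sum>j\<le>Suc k. if face D u j = t then (-1) ^ j else 0 :: rat)" for u
  define A where "A s u = (\<Sum>i\<le>Suc (Suc k). if face D s i = u then (-1) ^ i else 0 :: rat)" for s u
  have inner: "(\<Sum>u\<in>Simp D (Suc k). A s u * B u) = (\<Sum>i\<le>Suc (Suc k). (-1) ^ i * B (face D s i))"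
    if s: "s \<in> Simp D (Suc (Suc k))" for s
  proof -
    have "(\<Sum>u\<in>Simp D (Suc k). A s u * B u) = (\<Sum>u\<in>Simp D (Suc k). \<Sum>i\<le>Suc (Suc k). (if face D s i = u then (-1) ^ i else 0) * B u)"
      unfolding A_def by (simp only: sum_distrib_right)
    also have "\<dots> = (\<Sum>i\<le>Suc (Suc k). \<Sum>u\<in>Simp D (Suc k). (if face D s i = u then (-1) ^ i else 0) * B u)"
      by (rule sum.swap)
    also have "\<dots> = (\<Sum>i\<le>Suc (Suc k). (-1) ^ i * B (face D s i))"
      by (rule sum.cong[OF refl], rule sum_delta_mult[OF Simp_fin[OF fin] face_Simp[OF s]]) auto
    finally show ?thesis .
  qed
  have zero: "(\<Sum>i\<le>Suc (Suc k). (-1) ^ i * B (face D s i)) = 0" if s: "s \<in> Simp D (Suc (Suc k))" for s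
  proof -
    have "(\<Sum>i\<le>Suc (Suc k). (-1) ^ i * B (face D s i)) =
        (\<Sum>i\<le>Suc (Suc k). \<Sum>j\<le>Suc k. (-1) ^ i * (if face D (face D s i) j = t then (-1) ^ j else 0))"
      unfolding B_def by (rule sum.cong[OF refl], rule sum_distrib_left)
    also have "\<dots> = 0"
    proof (rule pair_cancel)
      fix i j assume ij: "j < i" "i \<le> Suc (Suc k)"
      have ff: "face D (face D s j) (i - 1) = face D (face D s i) j" using face_face[OF s ij] by simp
      have sg: "(-1) ^ j * (-1) ^ (i - 1) = - ((-1) ^ i * (-1) ^ j :: rat)"
      proof -
        have "i = Suc (i - 1)" using ij by simp
        then have "(-1::rat) ^ i = - ((-1) ^ (i - 1))" by (metis power_Suc mult_minus1)
        then show ?thesis by simp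
      qed
      show "(-1) ^ j * (if face D (face D s j) (i - 1) = t then (-1) ^ (i - 1) else 0) =
            - ((-1) ^ i * (if face D (face D s i) j = t then (-1) ^ j else 0 :: rat))"
        using sg ff by simp
    qed
    finally show ?thesis .
  qed
  have "bd D (Suc k) (bd D (Suc (Suc k)) c) t =
      (\<Sum>u\<in>Simp D (Suc k). (\<Sum>s\<in>Simp D (Suc (Suc k)). c s * A s u) * B u)"
    unfolding bd_def A_def B_def by (simp del: sum.atMost_Suc)
  also have "\<dots> = (\<Sum>u\<in>Simp D (Suc k). \<Sum>s\<in>Simp D (Suc (Suc k)). c s * (A s u * B u))"
    by (simp only: sum_distrib_right mult.assoc)
  also have "\<dots> = (\<Sum>s\<in>Simp D (Suc (Suc k)). \<Sum>u\<in>Simp D (Suc k). c s * (A s u * B u))"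
    by (rule sum.swap)
  also have "\<dots> = (\<Sum>s\<in>Simp D (Suc (Suc k)). c s * (\<Sum>u\<in>Simp D (Suc k). A s u * B u))"
    by (simp only: sum_distrib_left)
  also have "\<dots> = 0" using inner zero by (simp del: sum.atMost_Suc)
  finally show "bd D (Suc k) (bd D (Suc (Suc k)) c) t = 0" .
qed

end

definition Fs :: "('o \<Rightarrow> 'o) \<Rightarrow> ('m \<Rightarrow> 'm) \<Rightarrow> 'o \<times> 'm list \<Rightarrow> 'o \<times> 'm list" where
  "Fs Fo Fm s = (Fo (fst s), map Fm (snd s))"

definition nd :: "('o, 'm) cat \<Rightarrow> ('m \<Rightarrow> 'm) \<Rightarrow> 'o \<times> 'm list \<Rightarrow> bool" where
  "nd D Fm s \<longleftrightarrow> (\<forall>a\<in>set (snd s). \<not> is_identity D (Fm a))"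

lemma chain_map_alt: "chain_map D Fo Fm k c = (\<lambda>t. \<Sum>s\<in>Simp D k. if nd D Fm s \<and> Fs Fo Fm s = t then c s else 0)"
  by (simp add: chain_map_def nd_def Fs_def)

locale afun = acat +
  fixes Fo Fm
  assumes fnc: "is_functor D Fo Fm"
    and finM: "finite (Mor D)"
begin

lemma fo_ob: "x \<in> Ob D \<Longrightarrow> Fo x \<in> Ob D" using fnc by (simp add: is_functor_def)
lemma fm_mor: "a \<in> Mor D \<Longrightarrow> Fm a \<in> Mor D" using fnc by (simp add: is_functor_def)
lemma dm_fm: "a \<in> Mor D \<Longrightarrow> Dm D (Fm a) = Fo (Dm D a)" using fnc by (simp add: is_functor_def)
lemma cd_fm: "a \<in> Mor D \<Longrightarrow> Cd D (Fm a) = Fo (Cd D a)" using fnc by (simp add: is_functor_def)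
lemma fm_id: "x \<in> Ob D \<Longrightarrow> Fm (Idt D x) = Idt D (Fo x)" using fnc by (simp add: is_functor_def)
lemma fm_cmp: "a \<in> Mor D \<Longrightarrow> b \<in> Mor D \<Longrightarrow> Cd D a = Dm D b \<Longrightarrow> Fm (Cmp D b a) = Cmp D (Fm b) (Fm a)"
  using fnc by (simp add: is_functor_def)

lemma nd_nth: "nd D Fm (x, ms) \<longleftrightarrow> (\<forall>p<length ms. \<not> is_identity D (Fm (ms ! p)))"
  by (simp add: nd_def all_set_conv_all_nth)

lemma Fs_Simp:
  assumes s: "s \<in> Simp D k" and n: "nd D Fm s"
  shows "Fs Fo Fm s \<in> Simp D k"
proof -
  obtain x ms where xm: "s = (x, ms)" by (cases s)
  have S: "length ms = k" "k = 0 \<longrightarrow> x \<in> Ob D" "0 < k \<longrightarrow> x = Dm D (ms ! 0)"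
    "\<And>p. p < k \<Longrightarrow> ms ! p \<in> Mor D"
    "\<And>p. Suc p < k \<Longrightarrow> Cd D (ms ! p) = Dm D (ms ! Suc p)" using s xm by (simp_all add: Simp_iff)
  have N: "\<And>p. p < k \<Longrightarrow> \<not> is_identity D (Fm (ms ! p))" using n xm S(1) by (simp add: nd_nth)
  show ?thesis unfolding xm Fs_def Simp_iff
    using S N fo_ob fm_mor dm_fm cd_fm by auto
qed

lemma chain_map_ch: "c \<in> chains D k \<Longrightarrow> chain_map D Fo Fm k c \<in> chains D k"
proof -
  have "t \<in> Simp D k" if nz: "chain_map D Fo Fm k c t \<noteq> 0" for t
  proof -
    obtain s where s: "s \<in> Simp D k" "(if nd D Fm s \<and> Fs Fo Fm s = t then c s else 0) \<noteq> 0"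
      using sum.not_neutral_contains_not_neutral[OF nz[unfolded chain_map_alt]] by blast
    then have "nd D Fm s" "Fs Fo Fm s = t" by (auto split: if_splits)
    then show ?thesis using Fs_Simp[OF s(1)] by simp
  qed
  then show ?thesis by (simp add: chains_def supported_def)
qed

lemma bd_ch: "c \<in> chains D (Suc k) \<Longrightarrow> bd D (Suc k) c \<in> chains D k"
proof -
  have "t \<in> Simp D k" if nz: "bd D (Suc k) c t \<noteq> 0" for t
  proof -
    have e: "bd D (Suc k) c t = (\<Sum>s\<in>Simp D (Suc k). c s * (\<Sum>i\<le>Suc k. if face D s i = t then (-1) ^ i else 0))"
      by (simp add: bd_def del: sum.atMost_Suc)
    obtain s where s: "s \<in> Simp D (Suc k)" "c s * (\<Sum>i\<le>Suc k. if face D s i = t then (-1) ^ i else 0) \<noteq> 0"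
      using sum.not_neutral_contains_not_neutral[OF nz[unfolded e]] by blast
    then have "(\<Sum>i\<le>Suc k. if face D s i = t then (-1::rat) ^ i else 0) \<noteq> 0" by (metis mult_zero_right)
    from sum.not_neutral_contains_not_neutral[OF this] obtain i where
      i: "i \<in> {..Suc k}" "(if face D s i = t then (-1::rat) ^ i else 0) \<noteq> 0" by blast
    then have "face D s i = t" by (metis (full_types))
    then show ?thesis using face_Simp[OF s(1)] i(1) by auto
  qed
  then show ?thesis by (simp add: chains_def supported_def)
qed

lemma F_face:
  assumes s: "s \<in> Simp D (Suc k)" and i: "i \<le> Suc k"
  shows "face D (Fs Fo Fm s) i = Fs Fo Fm (face D s i)"
proof -
  obtain x ms where xm: "s = (x, ms)" by (cases s)
  have S: "length ms = Suc k" "x = Dm D (ms ! 0)"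
    "\<And>p. p < Suc k \<Longrightarrow> ms ! p \<in> Mor D"
    "\<And>p. Suc p < Suc k \<Longrightarrow> Cd D (ms ! p) = Dm D (ms ! Suc p)" using s xm by (simp_all add: Simp_iff)
  have f1: "fst (face D (Fs Fo Fm s) i) = fst (Fs Fo Fm (face D s i))"
    using face_fst[of D "Fs Fo Fm s" i] face_fst[of D s i] xm S cd_fm by (simp add: Fs_def)
  have l1: "length (snd (face D (Fs Fo Fm s) i)) = k" using face_len[of "Fs Fo Fm s" i D] xm S i by (simp add: Fs_def)
  have l2: "length (snd (face D s i)) = k" using face_len[of s i D] xm S i by simp
  have "snd (face D (Fs Fo Fm s) i) = snd (Fs Fo Fm (face D s i))"
  proof (rule nth_equalityI)
    show "length (snd (face D (Fs Fo Fm s) i)) = length (snd (Fs Fo Fm (face D s i)))"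
      using l1 l2 by (simp add: Fs_def)
    fix p assume "p < length (snd (face D (Fs Fo Fm s) i))"
    then have p: "p < k" using l1 by simp
    have e1: "snd (face D (Fs Fo Fm s) i) ! p = (if Suc p < i then Fm (ms ! p) else if Suc p = i then Cmp D (Fm (ms ! i)) (Fm (ms ! (i - 1)))
     else Fm (ms ! Suc p))" using face_nth[of i "Fs Fo Fm s" p D] xm S i p by (simp add: Fs_def)
    have e2: "snd (face D s i) ! p = (if Suc p < i then ms ! p else if Suc p = i then Cmp D (ms ! i) (ms ! (i - 1))
     else ms ! Suc p)" using face_nth[of i s p D] xm S i p by simp
    have e3: "Fm (Cmp D (ms ! i) (ms ! (i - 1))) = Cmp D (Fm (ms ! i)) (Fm (ms ! (i - 1)))" if "Suc p = i"
    proof -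
      have "i - 1 = p" "i < Suc k" using that p by auto
      then show ?thesis using fm_cmp[of "ms ! (i - 1)" "ms ! i"] S(3)[of p] S(3)[of i] S(4)[of p] that by simp
    qed
    show "snd (face D (Fs Fo Fm s) i) ! p = snd (Fs Fo Fm (face D s i)) ! p"
      using e1 e2 e3 p l2 by (simp add: Fs_def)
  qed
  then show ?thesis using f1 by (simp add: prod_eq_iff)
qed

lemma nd_face:
  assumes s: "s \<in> Simp D (Suc k)" and i: "i \<le> Suc k" and n: "nd D Fm s"
  shows "nd D Fm (face D s i)"
proof -
  obtain x ms where xm: "s = (x, ms)" by (cases s)
  have S: "length ms = Suc k"
    "\<And>p. p < Suc k \<Longrightarrow> ms ! p \<in> Mor D"
    "\<And>p. Suc p < Suc k \<Longrightarrow> Cd D (ms ! p) = Dm D (ms ! Suc p)" using s xm by (simp_all add: Simp_iff)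
  have N: "\<And>p. p < Suc k \<Longrightarrow> \<not> is_identity D (Fm (ms ! p))" using n xm S(1) by (simp add: nd_nth)
  have l2: "length (snd (face D s i)) = k" using face_len[of s i D] xm S i by simp
  have "\<not> is_identity D (Fm (snd (face D s i) ! p))" if p: "p < k" for p
  proof -
    have e2: "snd (face D s i) ! p = (if Suc p < i then ms ! p else if Suc p = i then Cmp D (ms ! i) (ms ! (i - 1))
     else ms ! Suc p)" using face_nth[of i s p D] xm S i p by simp
    show ?thesis
    proof (cases "Suc p = i")
      case True
      then have ip: "i - 1 = p" "i < Suc k" using p by auto
      have a: "ms ! p \<in> Mor D" "ms ! i \<in> Mor D" "Cd D (ms ! p) = Dm D (ms ! i)" using S p ip True by auto
      have b: "Fm (ms ! p) \<in> Mor D" "Fm (ms ! i) \<in> Mor D" "Cd D (Fm (ms ! p)) = Dm D (Fm (ms ! i))"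
        using a fm_mor cd_fm dm_fm by auto
      show ?thesis using e2 True ip fm_cmp[OF a] comp_nonid[OF b N[of p]] p by simp
    next
      case False then show ?thesis using e2 N p by simp
    qed
  qed
  then show ?thesis using l2 by (cases "face D s i") (simp add: nd_nth)
qed

end

lemma face_contains:
  assumes "length ns = Suc k" "j < Suc k" "i \<le> Suc k" "i \<noteq> j" "i \<noteq> Suc j"
  shows "ns ! j \<in> set (snd (face D (y, ns) i))"
proof -
  have l: "length (snd (face D (y, ns) i)) = k" using face_len[of "(y, ns)" i D] assms by simp
  show ?thesis
  proof (cases "Suc j < i")
    case True
    then have "snd (face D (y, ns) i) ! j = ns ! j" "j < k" using face_nth[of i "(y, ns)" j D] assms by auto
    then show ?thesis using l by (metis nth_mem)
  next
    case False
    then have i: "i < j" using assms by simp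
    then have "snd (face D (y, ns) i) ! (j - 1) = ns ! j" "j - 1 < k" using face_nth[of i "(y, ns)" "j - 1" D] assms by auto
    then show ?thesis using l by (metis nth_mem)
  qed
qed

context acat
begin

lemma face_degen:
  assumes len: "length ns = Suc k" and M: "\<And>p. p < Suc k \<Longrightarrow> ns ! p \<in> Mor D"
    and C: "\<And>p. Suc p < Suc k \<Longrightarrow> Cd D (ns ! p) = Dm D (ns ! Suc p)"
    and y: "y = Dm D (ns ! 0)" and j: "j < Suc k" and idj: "is_identity D (ns ! j)"
  shows "face D (y, ns) j = face D (y, ns) (Suc j)"
proof -
  have idj': "ns ! j = Idt D (Dm D (ns ! j))" using idj by (simp add: is_identity_def)
  have dc: "Cd D (ns ! j) = Dm D (ns ! j)" using idj' cd_id[OF dm_ob[OF M[OF j]]] by metis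
  have fst_eq: "fst (face D (y, ns) j) = fst (face D (y, ns) (Suc j))"
    using face_fst[of D "(y, ns)" j] face_fst[of D "(y, ns)" "Suc j"] y dc by auto
  have l1: "length (snd (face D (y, ns) j)) = k" using face_len[of "(y, ns)" j D] len j by simp
  have l2: "length (snd (face D (y, ns) (Suc j))) = k" using face_len[of "(y, ns)" "Suc j" D] len j by simp
  have "snd (face D (y, ns) j) = snd (face D (y, ns) (Suc j))"
  proof (rule nth_equalityI)
    show "length (snd (face D (y, ns) j)) = length (snd (face D (y, ns) (Suc j)))" using l1 l2 by simp
    fix p assume "p < length (snd (face D (y, ns) j))"
    then have p: "p < k" using l1 by simp
    have e1: "snd (face D (y, ns) j) ! p = (if Suc p < j then ns ! p else if Suc p = j then Cmp D (ns ! j) (ns ! (j - 1))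
     else ns ! Suc p)" using face_nth[of j "(y, ns)" p D] len j p by simp
    have e2: "snd (face D (y, ns) (Suc j)) ! p = (if Suc p < Suc j then ns ! p else if Suc p = Suc j then Cmp D (ns ! Suc j) (ns ! j)
     else ns ! Suc p)" using face_nth[of "Suc j" "(y, ns)" p D] len j p by simp
    consider "Suc p < j" | "Suc p = j" | "p = j" | "j < p" by linarith
    then show "snd (face D (y, ns) j) ! p = snd (face D (y, ns) (Suc j)) ! p"
    proof cases
      case 1 then show ?thesis using e1 e2 by simp
    next
      case 2
      then have "Cd D (ns ! p) = Dm D (ns ! j)" using C[of p] p by simp
      then have "ns ! j = Idt D (Cd D (ns ! p))" by (subst \<open>Cd D (ns ! p) = Dm D (ns ! j)\<close>) (rule idj')
      then have "Cmp D (ns ! j) (ns ! p) = ns ! p" using id_left[OF M[of p]] p by (metis less_SucI)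
      moreover have "j - 1 = p" "Suc p < Suc j" "\<not> Suc p < j" using 2 by auto
      ultimately show ?thesis using e1 e2 2 by simp
    next
      case 3
      then have "Dm D (ns ! Suc j) = Dm D (ns ! j)" using C[of j] p dc by simp
      then have "ns ! j = Idt D (Dm D (ns ! Suc j))" by (subst \<open>Dm D (ns ! Suc j) = Dm D (ns ! j)\<close>) (rule idj')
      then have "Cmp D (ns ! Suc j) (ns ! j) = ns ! Suc j" using id_right[OF M[of "Suc j"]] p 3 by (metis Suc_mono)
      then show ?thesis using e1 e2 3 by simp
    next
      case 4 then show ?thesis using e1 e2 by simp
    qed
  qed
  then show ?thesis using fst_eq by (simp add: prod_eq_iff)
qed

end

context afun
begin

lemma nd_Fs: "nd D Fm w \<longleftrightarrow> (\<forall>b\<in>set (snd (Fs Fo Fm w)). \<not> is_identity D b)"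
  by (simp add: nd_def Fs_def)

lemma degen_sum:
  assumes s: "s \<in> Simp D (Suc k)" and n: "\<not> nd D Fm s"
  shows "(\<Sum>i\<le>Suc k. (-1) ^ i * (if nd D Fm (face D s i) \<and> Fs Fo Fm (face D s i) = t then 1 else 0 :: rat)) = 0"
proof -
  obtain x ms where xm: "s = (x, ms)" by (cases s)
  have S: "length ms = Suc k" "x = Dm D (ms ! 0)"
    "\<And>p. p < Suc k \<Longrightarrow> ms ! p \<in> Mor D"
    "\<And>p. Suc p < Suc k \<Longrightarrow> Cd D (ms ! p) = Dm D (ms ! Suc p)" using s xm by (simp_all add: Simp_iff)
  obtain j where j: "j < Suc k" "is_identity D (Fm (ms ! j))" using n xm S(1) by (auto simp: nd_nth)
  define g where "g i = (if nd D Fm (face D s i) \<and> Fs Fo Fm (face D s i) = t then 1 else 0 :: rat)" for i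
  have g0: "g i = 0" if "i \<le> Suc k" "i \<noteq> j" "i \<noteq> Suc j" for i
  proof -
    have "ms ! j \<in> set (snd (face D s i))" using face_contains[of ms k j i D x] S j that xm by simp
    then have "\<not> nd D Fm (face D s i)" using j by (auto simp: nd_def)
    then show ?thesis by (simp add: g_def)
  qed
  have Fsdef: "Fs Fo Fm s = (Fo x, map Fm ms)" using xm by (simp add: Fs_def)
  have fd: "face D (Fs Fo Fm s) j = face D (Fs Fo Fm s) (Suc j)"
    unfolding Fsdef
  proof (rule face_degen[where k = k])
    show "length (map Fm ms) = Suc k" using S by simp
    show "\<And>p. p < Suc k \<Longrightarrow> map Fm ms ! p \<in> Mor D" using S fm_mor by simp
    show "\<And>p. Suc p < Suc k \<Longrightarrow> Cd D (map Fm ms ! p) = Dm D (map Fm ms ! Suc p)"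
      using S cd_fm dm_fm by simp
    show "Fo x = Dm D (map Fm ms ! 0)" using S dm_fm by simp
  qed (use j S in simp_all)
  have gj: "g j = g (Suc j)"
  proof -
    have "Fs Fo Fm (face D s j) = Fs Fo Fm (face D s (Suc j))"
      using fd F_face[OF s, of j] F_face[OF s, of "Suc j"] j by simp
    then show ?thesis unfolding g_def nd_Fs by simp
  qed
  have "(\<Sum>i\<le>Suc k. (-1) ^ i * g i) = (\<Sum>i\<in>{j, Suc j}. (-1) ^ i * g i)"
    by (rule sum.mono_neutral_right) (use j g0 in auto)
  also have "\<dots> = 0" using gj by simp
  finally show ?thesis by (simp add: g_def)
qed

lemma chain_comm:
  "bd D (Suc k) (chain_map D Fo Fm (Suc k) c) = chain_map D Fo Fm k (bd D (Suc k) c)"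
proof
  fix t
  define B where "B u = (\<Sum>i\<le>Suc k. if face D u i = t then (-1) ^ i else 0 :: rat)" for u
  define G where "G u = (if nd D Fm u \<and> Fs Fo Fm u = t then 1 else 0 :: rat)" for u
  have fin: "\<And>k. finite (Simp D k)" using Simp_fin[OF finM] .
  have L: "bd D (Suc k) (chain_map D Fo Fm (Suc k) c) t =
      (\<Sum>u\<in>Simp D (Suc k). (\<Sum>s\<in>Simp D (Suc k). if nd D Fm s \<and> Fs Fo Fm s = u then c s else 0) * B u)"
    unfolding bd_def chain_map_alt B_def by (simp del: sum.atMost_Suc)
  also have "\<dots> = (\<Sum>s\<in>Simp D (Suc k). \<Sum>u\<in>Simp D (Suc k). (if Fs Fo Fm s = u then (if nd D Fm s then c s else 0) else 0) * B u)"
    by (simp only: sum_distrib_right, rule sum.swap[THEN trans], intro sum.cong refl) auto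
  also have "\<dots> = (\<Sum>s\<in>Simp D (Suc k). if nd D Fm s then c s * B (Fs Fo Fm s) else 0)"
  proof (rule sum.cong[OF refl])
    fix s assume s: "s \<in> Simp D (Suc k)"
    show "(\<Sum>u\<in>Simp D (Suc k). (if Fs Fo Fm s = u then (if nd D Fm s then c s else 0) else 0) * B u) =
      (if nd D Fm s then c s * B (Fs Fo Fm s) else 0)"
    proof (cases "nd D Fm s")
      case True
      then show ?thesis using sum_delta_mult[OF fin Fs_Simp[OF s True], of "c s" B] by simp
    next
      case False then show ?thesis by simp
    qed
  qed
  finally have L': "bd D (Suc k) (chain_map D Fo Fm (Suc k) c) t = \<dots>" .
  have "chain_map D Fo Fm k (bd D (Suc k) c) t =
     (\<Sum>u\<in>Simp D k. G u * (\<Sum>s\<in>Simp D (Suc k). c s * (\<Sum>i\<le>Suc k. if face D s i = u then (-1) ^ i else 0)))"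
    unfolding bd_def chain_map_alt G_def by (simp del: sum.atMost_Suc, intro sum.cong refl, simp)
  also have "\<dots> = (\<Sum>s\<in>Simp D (Suc k). c s * (\<Sum>i\<le>Suc k. \<Sum>u\<in>Simp D k. (if face D s i = u then (-1) ^ i else 0) * G u))"
    by (simp only: sum_distrib_left sum_distrib_right, rule sum.swap[THEN trans], intro sum.cong refl,
        rule sum.swap[THEN trans], intro sum.cong refl) (simp add: algebra_simps)
  also have "\<dots> = (\<Sum>s\<in>Simp D (Suc k). c s * (\<Sum>i\<le>Suc k. (-1) ^ i * G (face D s i)))"
    by (intro sum.cong refl arg_cong2[where f = "(*)"], rule sum_delta_mult[OF fin face_Simp]) auto
  also have "\<dots> = (\<Sum>s\<in>Simp D (Suc k). if nd D Fm s then c s * B (Fs Fo Fm s) else 0)"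
  proof (rule sum.cong[OF refl])
    fix s assume s: "s \<in> Simp D (Suc k)"
    show "c s * (\<Sum>i\<le>Suc k. (-1) ^ i * G (face D s i)) = (if nd D Fm s then c s * B (Fs Fo Fm s) else 0)"
    proof (cases "nd D Fm s")
      case True
      have "(\<Sum>i\<le>Suc k. (-1) ^ i * G (face D s i)) = B (Fs Fo Fm s)"
        unfolding B_def G_def
        by (rule sum.cong[OF refl]) (simp add: nd_face[OF s _ True] F_face[OF s])
      then show ?thesis using True by simp
    next
      case False
      then show ?thesis using degen_sum[OF s False, of t] unfolding G_def by simp
    qed
  qed
  finally show "bd D (Suc k) (chain_map D Fo Fm (Suc k) c) t = chain_map D Fo Fm k (bd D (Suc k) c) t"
    using L' by simp
qed

end

lemma T_chains:
  fixes D :: "('o, 'm) cat"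
  assumes fin: "finite (Simp D k)" and f: "lin f" "\<And>c. c \<in> chains D k \<Longrightarrow> f c \<in> chains D k"
  shows "T (chains D k) f = (\<Sum>s\<in>Simp D k. f (\<lambda>t. if t = s then 1 else 0) s)"
proof -
  obtain ss where ss: "set ss = Simp D k" "distinct ss" using finite_distinct_list[OF fin] by blast
  define e where "e s = (\<lambda>t. if t = s then 1 else 0 :: rat)" for s :: "'o \<times> 'm list"
  let ?es = "map e ss"
  have lc_es: "lc c ?es t = (\<Sum>i<length ss. c i * (if t = ss ! i then 1 else 0))" for c t
    by (simp add: lc_def e_def)
  have lc_at: "lc c ?es (ss ! i) = c i" if i: "i < length ss" for c i
  proof -
    have "lc c ?es (ss ! i) = (\<Sum>l<length ss. if l = i then c l else 0)"
      unfolding lc_es using ss(2) i by (intro sum.cong refl) (auto simp: nth_eq_iff_index_eq)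
    also have "\<dots> = c i" using i by simp
    finally show ?thesis .
  qed
  have lc_out: "lc c ?es t = 0" if "t \<notin> Simp D k" for c t
    unfolding lc_es using that ss(1) by (auto intro!: sum.neutral)
  have indep: "lindep_free ?es"
    unfolding lindep_free_lc using lc_at by (metis length_map)
  have repr: "v = lc (\<lambda>i. v (ss ! i)) ?es" if v: "v \<in> chains D k" for v
  proof
    fix t
    show "v t = lc (\<lambda>i. v (ss ! i)) ?es t"
    proof (cases "t \<in> Simp D k")
      case True
      then obtain i where "i < length ss" "t = ss ! i" using ss(1) by (metis in_set_conv_nth)
      then show ?thesis using lc_at by simp
    next
      case False
      moreover have "v t = 0" using False v unfolding chains_def supported_def by blast
      ultimately show ?thesis using lc_out by simp
    qed
  qed
  have span: "lspan ?es = chains D k"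
  proof
    show "lspan ?es \<subseteq> chains D k" unfolding lspan_lc using lc_out by (auto simp: chains_def supported_def)
    show "chains D k \<subseteq> lspan ?es" unfolding lspan_lc using repr by auto
  qed
  have B: "is_basis (chains D k) ?es" using indep span by (simp add: is_basis_def)
  have "T (chains D k) f = tr ?es f" by (rule T_eq[OF B f])
  also have "\<dots> = (\<Sum>i<length ss. f (e (ss ! i)) (ss ! i))"
  proof -
    have "co ?es (f (?es ! i)) i = f (e (ss ! i)) (ss ! i)" if i: "i < length ss" for i
    proof -
      have m: "f (e (ss ! i)) \<in> chains D k" using f(2) basis_nth_mem[OF B, of i] i by simp
      show ?thesis using co_lc[OF B, of i] repr[OF m] i by (metis length_map nth_map)
    qed
    then show ?thesis by (simp add: tr_def)
  qed
  also have "\<dots> = (\<Sum>s\<in>Simp D k. f (e s) s)" using sum_nth_set[OF ss(2), of "\<lambda>s. f (e s) s"] ss(1) by simp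
  finally show ?thesis by (simp add: e_def)
qed

context hopf_setting
begin

lemma qd_eq: "of_nat (quot_dim (cycles D k) (boundaries D k)) = quot_trace (cycles D k) (boundaries D k) (\<lambda>x. x)"
proof -
  have A: "is_basis (boundaries D k) (fst (adapted_basis (cycles D k) (boundaries D k))) \<and>
         is_basis (cycles D k) (fst (adapted_basis (cycles D k) (boundaries D k)) @ snd (adapted_basis (cycles D k) (boundaries D k)))"
    by (rule adapted_ok[OF fin bnd_sub cyc_sub bnd_cyc]) (use cyc_ch sup_ch in auto)
  show ?thesis by (rule quot_dim_eq[OF A[THEN conjunct1] A[THEN conjunct2]])
qed

end

lemma id_functor: "is_category D \<Longrightarrow> is_functor D (\<lambda>x. x) (\<lambda>x. x)"
  by (simp add: is_functor_def is_category_def)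

lemma hopf_id:
  assumes "finite_acyclic_cat D"
  shows "hopf_setting D (\<lambda>k c. c)"
proof -
  interpret afun D "\<lambda>x. x" "\<lambda>x. x"
    using assms id_functor by unfold_locales (auto simp: finite_acyclic_cat_def acyclic_cat_def)
  show ?thesis
    by unfold_locales (auto simp: Simp_fin[OF finM] bd_ch bd_bd[OF finM] lin_id)
qed

lemma hopf_F:
  assumes "finite_acyclic_cat D" "is_functor D Fo Fm"
  shows "hopf_setting D (chain_map D Fo Fm)"
proof -
  interpret afun D Fo Fm
    using assms by unfold_locales (auto simp: finite_acyclic_cat_def)
  show ?thesis
    by unfold_locales (auto simp: Simp_fin[OF finM] bd_ch bd_bd[OF finM] chain_map_lin chain_map_ch chain_comm)
qed

lemma euler_eq:
  assumes D: "finite_acyclic_cat D"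
  shows "(of_int (euler D) :: rat) = (\<Sum>i\<le>card (Mor D). (-1) ^ i * of_nat (card (Simp D i)))"
proof -
  interpret hopf_setting D "\<lambda>k c. c" by (rule hopf_id[OF D])
  interpret acat D using D by unfold_locales (simp add: finite_acyclic_cat_def)
  have finM: "finite (Mor D)" using D by (simp add: finite_acyclic_cat_def)
  have "(of_int (euler D) :: rat) = (\<Sum>i\<le>card (Mor D). (-1) ^ i * quot_trace (cycles D i) (boundaries D i) (\<lambda>x. x))"
    unfolding euler_def by (simp add: qd_eq)
  also have "\<dots> = (\<Sum>i\<le>card (Mor D). (-1) ^ i * T (chains D i) (\<lambda>x. x))"
    by (rule hopf[of "card (Mor D)"]) (rule Simp_empty[OF finM], simp)
  also have "\<dots> = (\<Sum>i\<le>card (Mor D). (-1) ^ i * of_nat (card (Simp D i)))"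
    by (intro sum.cong refl arg_cong2[where f = "(*)"]) (simp add: T_chains[OF fin lin_id])
  finally show ?thesis .
qed

lemma lef_eq:
  assumes D: "finite_acyclic_cat D" and F: "is_functor D Fo Fm"
  shows "lefschetz D Fo Fm = (\<Sum>i\<le>card (Mor D). (-1) ^ i * of_nat (card {s \<in> Simp D i. nd D Fm s \<and> Fs Fo Fm s = s}))"
proof -
  interpret hopf_setting D "chain_map D Fo Fm" by (rule hopf_F[OF D F])
  interpret afun D Fo Fm using D F by unfold_locales (auto simp: finite_acyclic_cat_def)
  have "lefschetz D Fo Fm = (\<Sum>i\<le>card (Mor D). (-1) ^ i * T (chains D i) (chain_map D Fo Fm i))"
    unfolding lefschetz_def by (rule hopf) (rule Simp_empty[OF finM], simp)
  also have "\<dots> = (\<Sum>i\<le>card (Mor D). (-1) ^ i * of_nat (card {s \<in> Simp D i. nd D Fm s \<and> Fs Fo Fm s = s}))"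
  proof (intro sum.cong refl arg_cong2[where f = "(*)"])
    fix i
    have "T (chains D i) (chain_map D Fo Fm i) =
        (\<Sum>s\<in>Simp D i. chain_map D Fo Fm i (\<lambda>t. if t = s then 1 else 0) s)"
      by (rule T_chains[OF fin chain_map_lin chain_map_ch])
    also have "\<dots> = (\<Sum>s\<in>Simp D i. if nd D Fm s \<and> Fs Fo Fm s = s then 1 else 0)"
    proof (rule sum.cong[OF refl])
      fix s assume s: "s \<in> Simp D i"
      have "chain_map D Fo Fm i (\<lambda>t. if t = s then 1 else 0) s =
          (\<Sum>s'\<in>Simp D i. if s' = s then (if nd D Fm s \<and> Fs Fo Fm s = s then 1 else 0) else 0)"
        unfolding chain_map_alt by (intro sum.cong refl) auto
      also have "\<dots> = (if nd D Fm s \<and> Fs Fo Fm s = s then 1 else 0)" using s fin by simp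
      finally show "chain_map D Fo Fm i (\<lambda>t. if t = s then 1 else 0) s = (if nd D Fm s \<and> Fs Fo Fm s = s then 1 else 0)" .
    qed
    also have "\<dots> = of_nat (card {s \<in> Simp D i. nd D Fm s \<and> Fs Fo Fm s = s})"
      using fin by (simp add: sum.If_cases Int_def)
    finally show "T (chains D i) (chain_map D Fo Fm i) = of_nat (card {s \<in> Simp D i. nd D Fm s \<and> Fs Fo Fm s = s})" .
  qed
  finally show ?thesis .
qed

lemma fixed_simps[simp]:
  "Ob (fixed_cat C Fo Fm) = {x \<in> Ob C. Fo x = x}" "Mor (fixed_cat C Fo Fm) = {a \<in> Mor C. Fm a = a}"
  "Dm (fixed_cat C Fo Fm) = Dm C" "Cd (fixed_cat C Fo Fm) = Cd C" "Idt (fixed_cat C Fo Fm) = Idt C"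
  "Cmp (fixed_cat C Fo Fm) = Cmp C"
  by (simp_all add: fixed_cat_def)

lemma fixed_is_identity[simp]: "is_identity (fixed_cat C Fo Fm) a = is_identity C a"
  by (simp add: is_identity_def)

lemma fixed_acyc:
  assumes C: "finite_acyclic_cat C" and F: "is_functor C Fo Fm"
  shows "finite_acyclic_cat (fixed_cat C Fo Fm)"
proof -
  interpret afun C Fo Fm using C F by unfold_locales (auto simp: finite_acyclic_cat_def)
  have h1: "Fo (Dm C a) = Dm C a" if "a \<in> Mor C" "Fm a = a" for a using dm_fm[OF that(1)] that(2) by simp
  have h2: "Fo (Cd C a) = Cd C a" if "a \<in> Mor C" "Fm a = a" for a using cd_fm[OF that(1)] that(2) by simp
  have h3: "Fm (Idt C x) = Idt C x" if "x \<in> Ob C" "Fo x = x" for x using fm_id[OF that(1)] that(2) by simp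
  have h4: "Fm (Cmp C b a) = Cmp C b a" if "a \<in> Mor C" "b \<in> Mor C" "Cd C a = Dm C b" "Fm a = a" "Fm b = b" for a b
    using fm_cmp[OF that(1-3)] that(4,5) by simp
  have cat: "is_category (fixed_cat C Fo Fm)"
    unfolding is_category_def fixed_simps
    by (auto simp: h1 h2 h3 h4 dm_ob cd_ob id_mor dm_id cd_id cmp_mor dm_cmp cd_cmp assoc id_left id_right)
  have "acyclic_cat (fixed_cat C Fo Fm)"
    using cat acyc unfolding acyclic_cat_def fixed_simps fixed_is_identity by blast
  then show ?thesis using finM by (simp add: finite_acyclic_cat_def)
qed

lemma fixed_simp_eq:
  assumes C: "finite_acyclic_cat C" and F: "is_functor C Fo Fm"
  shows "{s \<in> Simp C i. nd C Fm s \<and> Fs Fo Fm s = s} = Simp (fixed_cat C Fo Fm) i"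
proof -
  interpret afun C Fo Fm using C F by unfold_locales (auto simp: finite_acyclic_cat_def)
  have me: "map Fm ms = ms \<longleftrightarrow> (\<forall>a\<in>set ms. Fm a = a)" for ms
    using map_eq_conv[of Fm ms "\<lambda>x. x"] by simp
  show ?thesis
  proof (intro set_eqI iffI)
    fix s assume "s \<in> {s \<in> Simp C i. nd C Fm s \<and> Fs Fo Fm s = s}"
    then obtain x ms where s: "s = (x, ms)" "(x, ms) \<in> Simp C i" "nd C Fm (x, ms)" "Fo x = x" "\<forall>a\<in>set ms. Fm a = a"
      by (cases s) (auto simp: Fs_def me)
    then show "s \<in> Simp (fixed_cat C Fo Fm) i"
      unfolding Simp_def by auto
  next
    fix s assume s0: "s \<in> Simp (fixed_cat C Fo Fm) i"
    obtain x ms where s: "s = (x, ms)" by (cases s)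
    have S: "length ms = i" "ms = [] \<longrightarrow> x \<in> Ob C \<and> Fo x = x" "ms \<noteq> [] \<longrightarrow> x = Dm C (hd ms)"
      "\<forall>a\<in>set ms. a \<in> Mor C \<and> Fm a = a" "\<forall>a\<in>set ms. \<not> is_identity C a"
      "\<forall>j. Suc j < i \<longrightarrow> Cd C (ms ! j) = Dm C (ms ! Suc j)"
      using s0 s unfolding Simp_def by auto
    have fx: "Fo x = x"
    proof (cases "ms = []")
      case False
      then have "hd ms \<in> set ms" by simp
      then show ?thesis using S(3,4) False dm_fm by metis
    qed (use S in auto)
    have "(x, ms) \<in> Simp C i" using S unfolding Simp_def by auto
    moreover have "nd C Fm (x, ms)" using S by (simp add: nd_def)
    moreover have "Fs Fo Fm (x, ms) = (x, ms)" using S fx by (simp add: Fs_def me)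
    ultimately show "s \<in> {s \<in> Simp C i. nd C Fm s \<and> Fs Fo Fm s = s}" using s by simp
  qed
qed

lemma part_b:
  assumes C: "finite_acyclic_cat C" and F: "is_functor C Fo Fm"
  shows "lefschetz C Fo Fm = of_int (euler (fixed_cat C Fo Fm))"
proof -
  let ?D = "fixed_cat C Fo Fm"
  have D: "finite_acyclic_cat ?D" by (rule fixed_acyc[OF C F])
  interpret d: acat ?D using D by unfold_locales (simp add: finite_acyclic_cat_def)
  have finC: "finite (Mor C)" using C by (simp add: finite_acyclic_cat_def)
  have finD: "finite (Mor ?D)" using D by (simp add: finite_acyclic_cat_def)
  have le: "card (Mor ?D) \<le> card (Mor C)" using finC by (simp add: card_mono)
  have "lefschetz C Fo Fm = (\<Sum>i\<le>card (Mor C). (-1) ^ i * of_nat (card (Simp ?D i)))"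
    using lef_eq[OF C F] fixed_simp_eq[OF C F] by simp
  also have "\<dots> = (\<Sum>i\<le>card (Mor ?D). (-1) ^ i * of_nat (card (Simp ?D i)))"
    by (rule sum.mono_neutral_right) (use le d.Simp_empty[OF finD] in auto)
  also have "\<dots> = of_int (euler ?D)" by (rule euler_eq[OF D, symmetric])
  finally show ?thesis .
qed

lemma no_fix:
  assumes C: "finite_acyclic_cat C" and F: "is_functor C Fo Fm" and nf: "\<not> (\<exists>x\<in>Ob C. Fo x = x)"
  shows "lefschetz C Fo Fm = 0"
proof -
  interpret afun C Fo Fm using C F by unfold_locales (auto simp: finite_acyclic_cat_def)
  have E: "{s \<in> Simp C i. nd C Fm s \<and> Fs Fo Fm s = s} = {}" for i
  proof (rule ccontr)
    assume "{s \<in> Simp C i. nd C Fm s \<and> Fs Fo Fm s = s} \<noteq> {}"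
    then obtain x ms where s: "(x, ms) \<in> Simp C i" "Fs Fo Fm (x, ms) = (x, ms)" by auto
    have "x \<in> Ob C" using s(1) dm_ob by (cases i) (auto simp: Simp_iff)
    moreover have "Fo x = x" using s(2) by (simp add: Fs_def)
    ultimately show False using nf by blast
  qed
  show ?thesis unfolding lef_eq[OF C F] E by simp
qed

lemma Rcat_simps[simp]:
  "Ob (Rcat C) = Ob C" "Mor (Rcat C) = {(x, y). x \<in> Ob C \<and> y \<in> Ob C \<and> reach C x y}"
  "Dm (Rcat C) = fst" "Cd (Rcat C) = snd" "Idt (Rcat C) = (\<lambda>x. (x, x))" "Cmp (Rcat C) = (\<lambda>b a. (fst a, snd b))"
  by (simp_all add: Rcat_def poset_cat_def)

context acat
begin

lemma reach_refl: "x \<in> Ob D \<Longrightarrow> reach D x x"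
  unfolding reach_def using id_mor dm_id cd_id by blast

lemma reach_trans: "reach D x y \<Longrightarrow> reach D y z \<Longrightarrow> reach D x z"
  unfolding reach_def using cmp_mor dm_cmp cd_cmp by metis

lemma reach_antisym: "reach D x y \<Longrightarrow> reach D y x \<Longrightarrow> x = y"
proof -
  assume "reach D x y" "reach D y x"
  then obtain a b where a: "a \<in> Mor D" "Dm D a = x" "Cd D a = y" and b: "b \<in> Mor D" "Dm D b = y" "Cd D b = x"
    unfolding reach_def by blast
  have ab: "Cd D a = Dm D b" and ba: "Cd D b = Dm D a" using a b by auto
  have "is_identity D (Cmp D b a)" using endo_id[OF cmp_mor[OF a(1) b(1) ab]] dm_cmp[OF a(1) b(1) ab] cd_cmp[OF a(1) b(1) ab] a b by simp
  then have "\<not> \<not> is_identity D a" using comp_nonid[OF a(1) b(1) ab] by blast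
  then have "a = Idt D (Dm D a)" by (simp add: is_identity_def)
  then show "x = y" using a cd_id[OF dm_ob[OF a(1)]] by metis
qed

end

lemma Rcat_acyc:
  assumes C: "finite_acyclic_cat C"
  shows "finite_acyclic_cat (Rcat C)"
proof -
  interpret acat C using C by unfold_locales (simp add: finite_acyclic_cat_def)
  have finC: "finite (Mor C)" using C by (simp add: finite_acyclic_cat_def)
  have cat: "is_category (Rcat C)"
    unfolding is_category_def Rcat_simps by (auto intro: reach_refl reach_trans)
  have idR: "is_identity (Rcat C) a \<longleftrightarrow> fst a = snd a" for a
    by (cases a) (auto simp: is_identity_def)
  have "acyclic_cat (Rcat C)"
    unfolding acyclic_cat_def using cat by (auto simp: idR intro: reach_antisym)
  moreover have "finite (Mor (Rcat C))"
  proof -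
    have "Mor (Rcat C) \<subseteq> Ob C \<times> Ob C" by auto
    then show ?thesis using ob_fin[OF finC] finite_subset by blast
  qed
  ultimately show ?thesis by (simp add: finite_acyclic_cat_def)
qed

lemma Rmor_fun:
  assumes C: "finite_acyclic_cat C" and F: "is_functor C Fo Fm"
  shows "is_functor (Rcat C) Fo (Rmor Fo)"
proof -
  interpret afun C Fo Fm using C F by unfold_locales (auto simp: finite_acyclic_cat_def)
  have r: "reach C (Fo x) (Fo y)" if "reach C x y" for x y
    using that fm_mor dm_fm cd_fm unfolding reach_def by metis
  show ?thesis unfolding is_functor_def Rcat_simps Rmor_def
    by (auto simp: fo_ob r)
qed

lemma fixed_Rcat: "fixed_cat (Rcat C) Fo (Rmor Fo) = Rfix C Fo"
  unfolding fixed_cat_def Rcat_def Rfix_def poset_cat_def Rmor_def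
  by (auto simp: set_eq_iff)

theorem mainTheorem1:
  fixes C :: "('o, 'm) cat" and Fo :: "'o \<Rightarrow> 'o" and Fm :: "'m \<Rightarrow> 'm"
  assumes "finite_acyclic_cat C"
    and "is_functor C Fo Fm"
  shows "lefschetz (Rcat C) Fo (Rmor Fo) = of_int (euler (Rfix C Fo)) \<and>
         lefschetz C Fo Fm = of_int (euler (fixed_cat C Fo Fm)) \<and>
         ((lefschetz (Rcat C) Fo (Rmor Fo) \<noteq> 0 \<or> lefschetz C Fo Fm \<noteq> 0)
            \<longrightarrow> (\<exists>x\<in>Ob C. Fo x = x))"
proof -
  have R: "finite_acyclic_cat (Rcat C)" by (rule Rcat_acyc[OF assms(1)])
  have RF: "is_functor (Rcat C) Fo (Rmor Fo)" by (rule Rmor_fun[OF assms])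
  have a: "lefschetz (Rcat C) Fo (Rmor Fo) = of_int (euler (Rfix C Fo))"
    using part_b[OF R RF] unfolding fixed_Rcat .
  have b: "lefschetz C Fo Fm = of_int (euler (fixed_cat C Fo Fm))" by (rule part_b[OF assms])
  have c: "\<exists>x\<in>Ob C. Fo x = x" if "lefschetz (Rcat C) Fo (Rmor Fo) \<noteq> 0 \<or> lefschetz C Fo Fm \<noteq> 0"
  proof (rule ccontr)
    assume nf: "\<not> (\<exists>x\<in>Ob C. Fo x = x)"
    have "lefschetz C Fo Fm = 0" by (rule no_fix[OF assms nf])
    moreover have "lefschetz (Rcat C) Fo (Rmor Fo) = 0" by (rule no_fix[OF R RF]) (use nf in simp)
    ultimately show False using that by simp
  qed
  show ?thesis using a b c by blast
qed

end
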